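(* Let $m,n\ge 2$. Then $(H(m),H(n),H(m,n),H(n,m))$ is a Hopf-Galois system, with structure maps $\alpha,\beta,\gamma,\delta$ all given on generators by $x^{(\alpha)}_{ij}\mapsto\sum_k x^{(\alpha)}_{ik}\otimes x^{(\alpha)}_{kj}$.
   Context: $k$ is a field. For $m,n\in\mathbb N^*$, $H(m,n)$ is the universal algebra with generators $x^{(\alpha)}_{ij}$, $1\le i\le m$, $1\le j\le n$, $\alpha\in\mathbb N$, and relations $x^{(\alpha)}\,{}^tx^{(\alpha+1)}=I_m$ and ${}^tx^{(\alpha+1)}x^{(\alpha)}=I_n$ for all $\alpha\in\mathbb N$, where $x^{(\alpha)}=(x^{(\alpha)}_{ij})$. $H(m):=H(m,m)$ is the free Hopf algebra on the matrix coalgebra $M_m(k)^*$, with $\Delta(x^{(\alpha)}_{ij})=\sum_k x^{(\alpha)}_{ik}\otimes x^{(\alpha)}_{kj}$, $\varepsilon(x^{(\alpha)}_{ij})=\delta_{ij}$, $S(x^{(\alpha)})={}^tx^{(\alpha+1)}$. A Hopf-Galois system consists of four non-zero $k$-algebras $(A,B,Z,T)$ with: (HG1) $A,B$ bialgebras; (HG2) $Z$ an $A$-$B$-bicomodule algebra with coactions $\alpha:Z\to A\otimes Z$, $\beta:Z\to Z\otimes B$; (HG3) algebra morphisms $\gamma:A\to Z\otimes T$, $\delta:B\to T\otimes Z$ with $(\gamma\otimes 1_Z)\alpha=(1_Z\otimes\delta)\beta$, $(\alpha\otimes 1_T)\gamma=(1_A\otimes\gamma)\Delta_A$, $(1_T\otimes\beta)\delta=(\delta\otimes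 1_B)\Delta_B$; (HG4) a linear map $S:T\to Z$ with $m_Z(1_Z\otimes S)\gamma=u_Z\varepsilon_A$ and $m_Z(S\otimes 1_Z)\delta=u_Z\varepsilon_B$. *)

theory Defs
  imports "HOL-Library.Poly_Mapping" "HOL-Library.Product_Plus"
begin

text \<open>Words over an alphabet form the free monoid (addition = concatenation).
  The monoid algebra ('v word => k) is the free (non-commutative)
  associative unital k-algebra on the alphabet 'v.\<close>

datatype 'v word = Word (letters: "'v list")

instantiation word :: (type) monoid_add
begin
definition zero_word_def: "0 = Word []"
definition plus_word_def: "u + w = Word (letters u @ letters w)"
instance by standard (simp_all add: zero_word_def plus_word_def)
end

text \<open>For monoids M, N the monoid algebra of M \<times> N is k[M] \<otimes> k[N]; so the
  free algebra on pairs of words is the tensor product of free algebras.\<close>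

definition sc :: "'k::semiring_1 \<Rightarrow> ('a \<Rightarrow>\<^sub>0 'k) \<Rightarrow> ('a \<Rightarrow>\<^sub>0 'k)" where
  "sc c p = Poly_Mapping.map (\<lambda>x. c * x) p"

definition linext :: "('a \<Rightarrow> ('b \<Rightarrow>\<^sub>0 'k::semiring_1)) \<Rightarrow> ('a \<Rightarrow>\<^sub>0 'k) \<Rightarrow> ('b \<Rightarrow>\<^sub>0 'k)" where
  "linext f p = (\<Sum>a\<in>Poly_Mapping.keys p. sc (Poly_Mapping.lookup p a) (f a))"

definition ext :: "('v \<Rightarrow> ('b::monoid_add \<Rightarrow>\<^sub>0 'k::semiring_1)) \<Rightarrow> ('v word \<Rightarrow>\<^sub>0 'k) \<Rightarrow> ('b \<Rightarrow>\<^sub>0 'k)" where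
  "ext g = linext (\<lambda>w. prod_list (map g (letters w)))"

definition tens :: "('a \<Rightarrow>\<^sub>0 'k::semiring_1) \<Rightarrow> ('b \<Rightarrow>\<^sub>0 'k) \<Rightarrow> ('a \<times> 'b \<Rightarrow>\<^sub>0 'k)" where
  "tens p q = linext (\<lambda>a. linext (\<lambda>b. Poly_Mapping.single (a, b) 1) q) p"

definition tmap :: "(('a \<Rightarrow>\<^sub>0 'k::semiring_1) \<Rightarrow> ('c \<Rightarrow>\<^sub>0 'k)) \<Rightarrow> (('b \<Rightarrow>\<^sub>0 'k) \<Rightarrow> ('d \<Rightarrow>\<^sub>0 'k))
    \<Rightarrow> ('a \<times> 'b \<Rightarrow>\<^sub>0 'k) \<Rightarrow> ('c \<times> 'd \<Rightarrow>\<^sub>0 'k)" where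
  "tmap f g = linext (\<lambda>(u, w). tens (f (Poly_Mapping.single u 1)) (g (Poly_Mapping.single w 1)))"

definition assocr :: "(('a \<times> 'b) \<times> 'c \<Rightarrow>\<^sub>0 'k::semiring_1) \<Rightarrow> ('a \<times> 'b \<times> 'c \<Rightarrow>\<^sub>0 'k)" where
  "assocr = linext (\<lambda>((a, b), c). Poly_Mapping.single (a, (b, c)) 1)"

definition mulmap :: "('a \<times> 'a \<Rightarrow>\<^sub>0 'k::semiring_1) \<Rightarrow> ('a::monoid_add \<Rightarrow>\<^sub>0 'k)" where
  "mulmap = linext (\<lambda>(u, w). Poly_Mapping.single (u + w) 1)"

text \<open>(\<epsilon> \<otimes> id) and (id \<otimes> \<epsilon>) composed with the canonical isomorphisms k \<otimes> V = V = V \<otimes> k.\<close>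
definition lcounit :: "(('a \<Rightarrow>\<^sub>0 'k::semiring_1) \<Rightarrow> 'k) \<Rightarrow> ('a \<times> 'b \<Rightarrow>\<^sub>0 'k) \<Rightarrow> ('b \<Rightarrow>\<^sub>0 'k)" where
  "lcounit e = linext (\<lambda>(u, w). sc (e (Poly_Mapping.single u 1)) (Poly_Mapping.single w 1))"

definition rcounit :: "(('b \<Rightarrow>\<^sub>0 'k::semiring_1) \<Rightarrow> 'k) \<Rightarrow> ('a \<times> 'b \<Rightarrow>\<^sub>0 'k) \<Rightarrow> ('a \<Rightarrow>\<^sub>0 'k)" where
  "rcounit e = linext (\<lambda>(u, w). sc (e (Poly_Mapping.single w 1)) (Poly_Mapping.single u 1))"

inductive_set ideal_of :: "'a::ring_1 set \<Rightarrow> 'a set" for R where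
  zero: "0 \<in> ideal_of R"
| gen: "r \<in> R \<Longrightarrow> a * r * b \<in> ideal_of R"
| add: "x \<in> ideal_of R \<Longrightarrow> y \<in> ideal_of R \<Longrightarrow> x + y \<in> ideal_of R"

text \<open>A presented algebra is given by a free algebra and a set R of relations; its
  elements are represented by elements of the free algebra, modulo ideal_of R.\<close>
definition eqv :: "'a::ring_1 set \<Rightarrow> 'a \<Rightarrow> 'a \<Rightarrow> bool" where
  "eqv R p q \<longleftrightarrow> p - q \<in> ideal_of R"

text \<open>Relations presenting the tensor product of two presented algebras:
  (k\<langle>X\<rangle>/(R)) \<otimes> (k\<langle>Y\<rangle>/(R')) = k[X* \<times> Y*]/(R \<otimes> 1, 1 \<otimes> R').\<close>
definition trel :: "('a::monoid_add \<Rightarrow>\<^sub>0 'k::semiring_1) set \<Rightarrow> ('b::monoid_add \<Rightarrow>\<^sub>0 'k) set \<Rightarrow> ('a \<times> 'b \<Rightarrow>\<^sub>0 'k) set" where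
  "trel R R' = (\<lambda>p. tens p 1) ` R \<union> (\<lambda>q. tens 1 q) ` R'"

definition nonzero_alg :: "'a::ring_1 set \<Rightarrow> bool" where
  "nonzero_alg R \<longleftrightarrow> (1::'a) \<notin> ideal_of R"

definition lin_map :: "('a::monoid_add \<Rightarrow>\<^sub>0 'k::comm_ring_1) set \<Rightarrow> ('b::monoid_add \<Rightarrow>\<^sub>0 'k) set
    \<Rightarrow> (('a \<Rightarrow>\<^sub>0 'k) \<Rightarrow> ('b \<Rightarrow>\<^sub>0 'k)) \<Rightarrow> bool" where
  "lin_map R R' f \<longleftrightarrow>
     (\<forall>p q. eqv R p q \<longrightarrow> eqv R' (f p) (f q)) \<and>
     (\<forall>p q. eqv R' (f (p + q)) (f p + f q)) \<and>
     (\<forall>c p. eqv R' (f (sc c p)) (sc c (f p)))"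

definition alg_map :: "('a::monoid_add \<Rightarrow>\<^sub>0 'k::comm_ring_1) set \<Rightarrow> ('b::monoid_add \<Rightarrow>\<^sub>0 'k) set
    \<Rightarrow> (('a \<Rightarrow>\<^sub>0 'k) \<Rightarrow> ('b \<Rightarrow>\<^sub>0 'k)) \<Rightarrow> bool" where
  "alg_map R R' f \<longleftrightarrow> lin_map R R' f \<and>
     (\<forall>p q. eqv R' (f (p * q)) (f p * f q)) \<and> eqv R' (f 1) 1"

definition char_map :: "('a::monoid_add \<Rightarrow>\<^sub>0 'k::comm_ring_1) set \<Rightarrow> (('a \<Rightarrow>\<^sub>0 'k) \<Rightarrow> 'k) \<Rightarrow> bool" where
  "char_map R e \<longleftrightarrow>
     (\<forall>p q. eqv R p q \<longrightarrow> e p = e q) \<and>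
     (\<forall>p q. e (p + q) = e p + e q) \<and> (\<forall>c p. e (sc c p) = c * e p) \<and>
     (\<forall>p q. e (p * q) = e p * e q) \<and> e 1 = 1"

definition bialgebra :: "('a::monoid_add \<Rightarrow>\<^sub>0 'k::comm_ring_1) set
    \<Rightarrow> (('a \<Rightarrow>\<^sub>0 'k) \<Rightarrow> ('a \<times> 'a \<Rightarrow>\<^sub>0 'k)) \<Rightarrow> (('a \<Rightarrow>\<^sub>0 'k) \<Rightarrow> 'k) \<Rightarrow> bool" where
  "bialgebra R D e \<longleftrightarrow>
     alg_map R (trel R R) D \<and> char_map R e \<and>
     (\<forall>p. eqv (trel R (trel R R)) (assocr (tmap D id (D p))) (tmap id D (D p))) \<and>
     (\<forall>p. eqv R (lcounit e (D p)) p) \<and>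
     (\<forall>p. eqv R (rcounit e (D p)) p)"

text \<open>Hopf-Galois system (A,B,Z,T), conditions (HG1)-(HG4); the algebras are given by
  relation sets RA RB RZ RT, the structure maps by DA eA DB eB al be ga de.\<close>
definition hopf_galois_system ::
  "('a::monoid_add \<Rightarrow>\<^sub>0 'k::comm_ring_1) set \<Rightarrow> ('b::monoid_add \<Rightarrow>\<^sub>0 'k) set
   \<Rightarrow> ('z::monoid_add \<Rightarrow>\<^sub>0 'k) set \<Rightarrow> ('t::monoid_add \<Rightarrow>\<^sub>0 'k) set
   \<Rightarrow> (('a \<Rightarrow>\<^sub>0 'k) \<Rightarrow> ('a \<times> 'a \<Rightarrow>\<^sub>0 'k)) \<Rightarrow> (('a \<Rightarrow>\<^sub>0 'k) \<Rightarrow> 'k)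
   \<Rightarrow> (('b \<Rightarrow>\<^sub>0 'k) \<Rightarrow> ('b \<times> 'b \<Rightarrow>\<^sub>0 'k)) \<Rightarrow> (('b \<Rightarrow>\<^sub>0 'k) \<Rightarrow> 'k)
   \<Rightarrow> (('z \<Rightarrow>\<^sub>0 'k) \<Rightarrow> ('a \<times> 'z \<Rightarrow>\<^sub>0 'k)) \<Rightarrow> (('z \<Rightarrow>\<^sub>0 'k) \<Rightarrow> ('z \<times> 'b \<Rightarrow>\<^sub>0 'k))
   \<Rightarrow> (('a \<Rightarrow>\<^sub>0 'k) \<Rightarrow> ('z \<times> 't \<Rightarrow>\<^sub>0 'k)) \<Rightarrow> (('b \<Rightarrow>\<^sub>0 'k) \<Rightarrow> ('t \<times> 'z \<Rightarrow>\<^sub>0 'k)) \<Rightarrow> bool" where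
  "hopf_galois_system RA RB RZ RT DA eA DB eB al be ga de \<longleftrightarrow>
     nonzero_alg RA \<and> nonzero_alg RB \<and> nonzero_alg RZ \<and> nonzero_alg RT \<and>
     \<comment> \<open>(HG1)\<close>
     bialgebra RA DA eA \<and> bialgebra RB DB eB \<and>
     \<comment> \<open>(HG2)\<close>
     alg_map RZ (trel RA RZ) al \<and> alg_map RZ (trel RZ RB) be \<and>
     (\<forall>p. eqv (trel RA (trel RA RZ)) (assocr (tmap DA id (al p))) (tmap id al (al p))) \<and>
     (\<forall>p. eqv RZ (lcounit eA (al p)) p) \<and>
     (\<forall>p. eqv (trel RZ (trel RB RB)) (assocr (tmap be id (be p))) (tmap id DB (be p))) \<and>
     (\<forall>p. eqv RZ (rcounit eB (be p)) p) \<and>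
     (\<forall>p. eqv (trel RA (trel RZ RB)) (assocr (tmap al id (be p))) (tmap id be (al p))) \<and>
     \<comment> \<open>(HG3)\<close>
     alg_map RA (trel RZ RT) ga \<and> alg_map RB (trel RT RZ) de \<and>
     (\<forall>p. eqv (trel RZ (trel RT RZ)) (assocr (tmap ga id (al p))) (tmap id de (be p))) \<and>
     (\<forall>p. eqv (trel RA (trel RZ RT)) (assocr (tmap al id (ga p))) (tmap id ga (DA p))) \<and>
     (\<forall>p. eqv (trel RT (trel RZ RB)) (tmap id be (de p)) (assocr (tmap de id (DB p)))) \<and>
     \<comment> \<open>(HG4)\<close>
     (\<exists>S. lin_map RT RZ S \<and>
        (\<forall>p. eqv RZ (mulmap (tmap id S (ga p))) (sc (eA p) 1)) \<and>
        (\<forall>p. eqv RZ (mulmap (tmap S id (de p))) (sc (eB p) 1)))"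

text \<open>Generators x^(a)_ij are encoded as letters (i, j, a).  All algebras use the
  alphabet nat \<times> nat \<times> nat; letters outside the index range 1..m, 1..n are set to 0
  by relations, so they do not change the algebra.\<close>
type_synonym gen = "nat \<times> nat \<times> nat"

definition X :: "nat \<Rightarrow> nat \<Rightarrow> nat \<Rightarrow> (gen word \<Rightarrow>\<^sub>0 'k::semiring_1)" where
  "X i j a = Poly_Mapping.single (Word [(i, j, a)]) 1"

definition hrels :: "nat \<Rightarrow> nat \<Rightarrow> (gen word \<Rightarrow>\<^sub>0 'k::field) set" where
  "hrels m n =
     {X i j a | i j a. \<not> (i \<in> {1..m} \<and> j \<in> {1..n})} \<union>
     {(\<Sum>l\<in>{1..n}. X i l a * X i' l (Suc a)) - (if i = i' then 1 else 0) | i i' a.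
        i \<in> {1..m} \<and> i' \<in> {1..m}} \<union>
     {(\<Sum>l\<in>{1..m}. X l j (Suc a) * X l j' a) - (if j = j' then 1 else 0) | j j' a.
        j \<in> {1..n} \<and> j' \<in> {1..n}}"

definition gcop :: "nat \<Rightarrow> gen \<Rightarrow> (gen word \<times> gen word \<Rightarrow>\<^sub>0 'k::field)" where
  "gcop K = (\<lambda>(i, j, a). \<Sum>k\<in>{1..K}. tens (X i k a) (X k j a))"

definition heps :: "nat \<Rightarrow> (gen word \<Rightarrow>\<^sub>0 'k::field) \<Rightarrow> 'k" where
  "heps m p = (\<Sum>w\<in>Poly_Mapping.keys p. Poly_Mapping.lookup p w *
      prod_list (map (\<lambda>(i, j, a). if i = j \<and> i \<in> {1..m} then 1 else 0) (letters w)))"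

end

theory Submission
  imports Defs
begin


section \<open>Generic linear algebra on poly_mappings\<close>

lemma lookup_sc: "Poly_Mapping.lookup (sc c p) w = c * Poly_Mapping.lookup p w"
  by (simp add: sc_def map.rep_eq when_def)

lemma sc_conv: "sc c p = Poly_Mapping.single 0 c * p"
  by (simp add: sc_def mult_map_scale_conv_mult)

lemma sc_add: "sc c (p + q) = sc c p + sc c q"
  by (rule poly_mapping_eqI) (simp add: lookup_sc lookup_add distrib_left)

lemma sc_add_left: "sc (c + d) p = sc c p + sc d p"
  by (rule poly_mapping_eqI) (simp add: lookup_sc lookup_add distrib_right)

lemma sc_sc: "sc c (sc d p) = sc (c * d) p"
  by (rule poly_mapping_eqI) (simp add: lookup_sc mult.assoc)

lemma sc_one [simp]: "sc 1 p = p"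
  by (rule poly_mapping_eqI) (simp add: lookup_sc)

lemma sc_zero [simp]: "sc 0 p = 0" "sc c 0 = 0"
  by (rule poly_mapping_eqI, simp add: lookup_sc)+

lemma sc_single: "sc c (Poly_Mapping.single w d) = Poly_Mapping.single w (c * d)"
  by (rule poly_mapping_eqI) (simp add: lookup_sc lookup_single when_def)

lemma sc_uminus: "sc c (- p) = - sc c (p :: 'a \<Rightarrow>\<^sub>0 'k::comm_ring_1)"
  by (rule poly_mapping_eqI) (simp add: lookup_sc)

lemma sc_diff: "sc c (p - q) = sc c p - sc c (q :: 'a \<Rightarrow>\<^sub>0 'k::comm_ring_1)"
  by (rule poly_mapping_eqI) (simp add: lookup_sc lookup_minus right_diff_distrib)

lemma sc_sum: "sc c (sum f A) = (\<Sum>x\<in>A. sc c (f x))"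
  by (induction A rule: infinite_finite_induct) (auto simp: sc_add)

lemma keys_sc: "Poly_Mapping.keys (sc c p) \<subseteq> Poly_Mapping.keys p"
  by (auto simp: in_keys_iff lookup_sc)

lemma pm_expand: "(p :: 'a \<Rightarrow>\<^sub>0 'k::comm_monoid_add) = (\<Sum>w\<in>Poly_Mapping.keys p. Poly_Mapping.single w (Poly_Mapping.lookup p w))"
proof (rule poly_mapping_eqI)
  fix k
  show "Poly_Mapping.lookup p k = Poly_Mapping.lookup (\<Sum>w\<in>Poly_Mapping.keys p. Poly_Mapping.single w (Poly_Mapping.lookup p w)) k"
    by (simp add: lookup_sum lookup_single when_def in_keys_iff)
qed

lemma pm_induct [case_names zero single add]:
  assumes "P 0" "\<And>w c. P (Poly_Mapping.single w c)" "\<And>p q. P p \<Longrightarrow> P q \<Longrightarrow> P (p + q)"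
  shows "P (p :: 'a \<Rightarrow>\<^sub>0 'k::comm_monoid_add)"
proof -
  have "P (\<Sum>w\<in>A. Poly_Mapping.single w (Poly_Mapping.lookup p w))" if "finite A" for A
    using that by (induction A rule: finite_induct) (auto simp: assms)
  then show ?thesis by (subst pm_expand) simp
qed

lemma sc_mult_left: "sc c (p * q) = sc c p * q"
  by (simp add: sc_conv mult.assoc)

lemma single0_comm: "p * Poly_Mapping.single 0 c = Poly_Mapping.single 0 c * (p :: 'a::monoid_add \<Rightarrow>\<^sub>0 'b::comm_semiring_1)"
proof (induction p rule: pm_induct)
  case zero then show ?case by simp
next
  case (single w d) then show ?case by (simp add: mult_single mult.commute)
next
  case (add p q) then show ?case by (simp add: distrib_left distrib_right)
qed

lemma sc_mult_right: "sc c (p * q) = p * sc c (q :: 'a::monoid_add \<Rightarrow>\<^sub>0 'b::comm_semiring_1)"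
  by (simp add: sc_conv mult.assoc flip: single0_comm)

lemma sc_mult_both: "sc c p * sc d q = sc (c * d) (p * (q :: 'a::monoid_add \<Rightarrow>\<^sub>0 'b::comm_semiring_1))"
  by (simp only: sc_mult_left[symmetric] sc_mult_right[symmetric] sc_sc mult.commute)

lemma sc_one_conv: "sc c (1 :: 'a::monoid_add \<Rightarrow>\<^sub>0 'k::comm_semiring_1) = Poly_Mapping.single 0 c"
  by (simp add: sc_conv)

lemma lookup_linext: "Poly_Mapping.lookup (linext g p) z =
   (\<Sum>w\<in>Poly_Mapping.keys p. Poly_Mapping.lookup p w * Poly_Mapping.lookup (g w) z)"
  by (simp add: linext_def lookup_sum lookup_sc)

lemma linext_add: "linext g (p + q) = linext g p + linext g q"
proof (rule poly_mapping_eqI)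
  fix z
  show "Poly_Mapping.lookup (linext g (p + q)) z = Poly_Mapping.lookup (linext g p + linext g q) z"
    unfolding lookup_add[of "linext g p"] lookup_linext
    by (rule setsum_keys_plus_distrib[where f="\<lambda>k v. v * Poly_Mapping.lookup (g k) z"]) (simp_all add: distrib_right)
qed

lemma linext_sc: "linext g (sc c p) = sc c (linext g p)"
proof (rule poly_mapping_eqI)
  fix z
  have "(\<Sum>w\<in>Poly_Mapping.keys (sc c p). c * Poly_Mapping.lookup p w * Poly_Mapping.lookup (g w) z)
      = (\<Sum>w\<in>Poly_Mapping.keys p. c * Poly_Mapping.lookup p w * Poly_Mapping.lookup (g w) z)"
    by (rule sum.mono_neutral_left) (auto simp: in_keys_iff lookup_sc)
  then show "Poly_Mapping.lookup (linext g (sc c p)) z = Poly_Mapping.lookup (sc c (linext g p)) z"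
    by (simp add: lookup_linext lookup_sc sum_distrib_left mult.assoc)
qed

lemma linext_zero [simp]: "linext g 0 = 0"
  by (simp add: linext_def)

lemma linext_single: "linext g (Poly_Mapping.single w c) = sc c (g w)"
  by (cases "c = 0") (simp_all add: linext_def)

lemma keys_linext: "Poly_Mapping.keys (linext g p) \<subseteq> (\<Union>w\<in>Poly_Mapping.keys p. Poly_Mapping.keys (g w))"
proof
  fix z assume "z \<in> Poly_Mapping.keys (linext g p)"
  then have "(\<Sum>w\<in>Poly_Mapping.keys p. Poly_Mapping.lookup p w * Poly_Mapping.lookup (g w) z) \<noteq> 0"
    by (simp add: in_keys_iff lookup_linext)
  then obtain w where "w \<in> Poly_Mapping.keys p" "Poly_Mapping.lookup (g w) z \<noteq> 0"
    by (metis (no_types, lifting) mult_zero_right sum.neutral)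
  then show "z \<in> (\<Union>w\<in>Poly_Mapping.keys p. Poly_Mapping.keys (g w))" by (auto simp: in_keys_iff)
qed

lemma linext_cong: "p = q \<Longrightarrow> (\<And>v. v \<in> Poly_Mapping.keys q \<Longrightarrow> f v = g v) \<Longrightarrow> linext f p = linext g q"
  by (simp add: linext_def)

definition lin :: "(('a \<Rightarrow>\<^sub>0 'k::comm_ring_1) \<Rightarrow> ('b \<Rightarrow>\<^sub>0 'k)) \<Rightarrow> bool" where
  "lin f \<longleftrightarrow> (\<forall>p q. f (p + q) = f p + f q) \<and> (\<forall>c p. f (sc c p) = sc c (f p))"

lemma linI: "(\<And>p q. f (p + q) = f p + f q) \<Longrightarrow> (\<And>c p. f (sc c p) = sc c (f p)) \<Longrightarrow> lin f"
  by (simp add: lin_def)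

lemma lin_add: "lin f \<Longrightarrow> f (p + q) = f p + f q"
  by (simp add: lin_def)

lemma lin_sc: "lin f \<Longrightarrow> f (sc c p) = sc c (f p)"
  by (simp add: lin_def)

lemma lin_zero: "lin f \<Longrightarrow> f 0 = 0"
  using lin_sc[of f 0 0] by simp

lemma lin_sum: "lin f \<Longrightarrow> f (sum g A) = (\<Sum>x\<in>A. f (g x))"
  by (induction A rule: infinite_finite_induct) (auto simp: lin_zero lin_add)

lemma lin_uminus: "lin f \<Longrightarrow> f (- p) = - f p"
proof -
  assume "lin f"
  have "- p = sc (-1) p" by (rule poly_mapping_eqI) (simp add: lookup_sc)
  moreover have "- f p = sc (-1) (f p)" by (rule poly_mapping_eqI) (simp add: lookup_sc)
  ultimately show ?thesis using \<open>lin f\<close> by (simp add: lin_sc)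
qed

lemma lin_diff: "lin f \<Longrightarrow> f (p - q) = f p - f q"
  using lin_add[of f p "- q"] lin_uminus[of f q] by simp

lemma lin_single: "lin f \<Longrightarrow> f (Poly_Mapping.single w c) = sc c (f (Poly_Mapping.single w 1))"
  using lin_sc[of f c "Poly_Mapping.single w 1"] by (simp add: sc_single)

lemma lin_linext: "lin (linext g)"
  by (simp add: lin_def linext_add linext_sc)

lemma lin_id: "lin id" "lin (\<lambda>x. x)"
  by (simp_all add: lin_def)

lemma lin_comp: "lin f \<Longrightarrow> lin g \<Longrightarrow> lin (\<lambda>x. f (g x))"
  by (simp add: lin_def)

lemma lin_eq:
  assumes "lin f" "lin h" "\<And>w. f (Poly_Mapping.single w 1) = h (Poly_Mapping.single w 1)"
  shows "f p = h p"
proof (induction p rule: pm_induct)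
  case zero then show ?case using assms by (simp add: lin_zero)
next
  case (single w c) then show ?case using assms lin_single[of f w c] lin_single[of h w c] by simp
next
  case (add p q) then show ?case using assms by (simp add: lin_add)
qed

lemma lin_eq_linext: "lin f \<Longrightarrow> f p = linext (\<lambda>w. f (Poly_Mapping.single w 1)) p"
  by (rule lin_eq[where h="linext (\<lambda>w. f (Poly_Mapping.single w 1))"]) (simp_all add: lin_linext linext_single)

lemma lin2_eq:
  assumes "\<And>q. lin (\<lambda>p. F p q)" "\<And>p. lin (\<lambda>q. F p q)"
    "\<And>q. lin (\<lambda>p. G p q)" "\<And>p. lin (\<lambda>q. G p q)"
    "\<And>u w. F (Poly_Mapping.single u 1) (Poly_Mapping.single w 1) = G (Poly_Mapping.single u 1) (Poly_Mapping.single w 1)"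
  shows "F p q = G p q"
proof -
  have "F (Poly_Mapping.single u 1) q = G (Poly_Mapping.single u 1) q" for u
    by (rule lin_eq[where f="\<lambda>q. F (Poly_Mapping.single u 1) q"]) (simp_all add: assms)
  then show ?thesis
    by (rule lin_eq[where f="\<lambda>p. F p q" and h="\<lambda>p. G p q", OF assms(1) assms(3)])
qed

lemma lin_mult_left: "lin (\<lambda>p. p * (q :: 'a::monoid_add \<Rightarrow>\<^sub>0 'k::comm_ring_1))"
  by (simp add: lin_def distrib_right sc_mult_left)

lemma lin_mult_right: "lin (\<lambda>q. (p :: 'a::monoid_add \<Rightarrow>\<^sub>0 'k::comm_ring_1) * q)"
  by (simp add: lin_def distrib_left sc_mult_right)

lemma lin_mult:
  fixes f :: "('a::monoid_add \<Rightarrow>\<^sub>0 'k::comm_ring_1) \<Rightarrow> ('b::monoid_add \<Rightarrow>\<^sub>0 'k)"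
  assumes "lin f" "\<And>u w. f (Poly_Mapping.single (u + w) 1) = f (Poly_Mapping.single u 1) * f (Poly_Mapping.single w 1)"
  shows "f (p * q) = f p * f q"
  by (rule lin2_eq[where F="\<lambda>p q. f (p * q)" and G="\<lambda>p q. f p * f q"])
     (simp_all add: lin_comp[OF assms(1) lin_mult_left] lin_comp[OF assms(1) lin_mult_right]
        lin_comp[OF lin_mult_left assms(1)] lin_comp[OF lin_mult_right assms(1)] mult_single assms(2))

definition hom :: "(('a::monoid_add \<Rightarrow>\<^sub>0 'k::comm_ring_1) \<Rightarrow> ('b::monoid_add \<Rightarrow>\<^sub>0 'k)) \<Rightarrow> bool" where
  "hom f \<longleftrightarrow> lin f \<and> (\<forall>p q. f (p * q) = f p * f q) \<and> f 1 = 1"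

lemma hom_lin: "hom f \<Longrightarrow> lin f" and hom_mult: "hom f \<Longrightarrow> f (p * q) = f p * f q"
  and hom_one: "hom f \<Longrightarrow> f 1 = 1"
  by (simp_all add: hom_def)

lemma hom_comp: "hom f \<Longrightarrow> hom g \<Longrightarrow> hom (\<lambda>x. f (g x))"
  by (simp add: hom_def lin_comp)

lemma hom_id: "hom id" "hom (\<lambda>x. x)"
  by (simp_all add: hom_def lin_id)

lemma hom_linext:
  assumes "\<And>u w. g (u + w) = g u * g w" "g 0 = 1"
  shows "hom (linext g)"
proof -
  have "linext g (p * q) = linext g p * linext g q" for p q
    by (rule lin_mult) (simp_all add: lin_linext linext_single assms)
  moreover have "linext g 1 = 1"
    by (simp add: linext_single assms flip: single_one)
  ultimately show ?thesis by (simp add: hom_def lin_linext)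
qed

lemma hom_prod_list: "hom f \<Longrightarrow> f (prod_list xs) = prod_list (map f xs)"
  by (induction xs) (simp_all add: hom_one hom_mult)

lemma hom_sum: "hom f \<Longrightarrow> f (sum g A) = (\<Sum>x\<in>A. f (g x))"
  by (simp add: hom_lin lin_sum)



section \<open>Ideals and congruences\<close>

lemma ideal_mult: "x \<in> ideal_of R \<Longrightarrow> a * x * b \<in> ideal_of R"
proof (induction x arbitrary: a b rule: ideal_of.induct)
  case zero then show ?case by (simp add: ideal_of.zero)
next
  case (gen r a' b') then show ?case
    using ideal_of.gen[of r R "a * a'" "b' * b"] by (simp add: mult.assoc)
next
  case (add x y) then show ?case by (simp add: distrib_left distrib_right ideal_of.add)
qed

lemma ideal_gen: "r \<in> R \<Longrightarrow> r \<in> ideal_of R"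
  using ideal_of.gen[of r R 1 1] by simp

lemma ideal_left: "x \<in> ideal_of R \<Longrightarrow> a * x \<in> ideal_of R"
  using ideal_mult[of x R a 1] by simp

lemma ideal_right: "x \<in> ideal_of R \<Longrightarrow> x * b \<in> ideal_of R"
  using ideal_mult[of x R 1 b] by simp

lemma ideal_uminus: "x \<in> ideal_of R \<Longrightarrow> - x \<in> ideal_of R"
  using ideal_left[of x R "- 1"] by simp

lemma ideal_diff: "x \<in> ideal_of R \<Longrightarrow> y \<in> ideal_of R \<Longrightarrow> x - y \<in> ideal_of R"
proof -
  assume a: "x \<in> ideal_of R" "y \<in> ideal_of R"
  have "x + (- y) \<in> ideal_of R" by (rule ideal_of.add[OF a(1) ideal_uminus[OF a(2)]])
  then show ?thesis by simp
qed

lemma ideal_sum: "(\<And>x. x \<in> A \<Longrightarrow> f x \<in> ideal_of R) \<Longrightarrow> sum f A \<in> ideal_of R"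
  by (induction A rule: infinite_finite_induct) (auto intro: ideal_of.zero ideal_of.add)

lemma ideal_sc: "x \<in> ideal_of R \<Longrightarrow> sc c x \<in> ideal_of R"
  by (simp add: sc_conv ideal_left)

lemma eqv_refl [simp]: "eqv R p p"
  by (simp add: eqv_def ideal_of.zero)

lemma eqv_sym: "eqv R p q \<Longrightarrow> eqv R q p"
  unfolding eqv_def using ideal_uminus by fastforce

lemma eqv_trans: "eqv R p q \<Longrightarrow> eqv R q r \<Longrightarrow> eqv R p r"
  unfolding eqv_def using ideal_of.add by fastforce

lemma eqv_add: "eqv R p p' \<Longrightarrow> eqv R q q' \<Longrightarrow> eqv R (p + q) (p' + q')"
  unfolding eqv_def using ideal_of.add by (fastforce simp: algebra_simps)

lemma eqv_uminus: "eqv R p p' \<Longrightarrow> eqv R (- p) (- p')"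
  unfolding eqv_def using ideal_uminus by (fastforce simp: algebra_simps)

lemma eqv_diff: "eqv R p p' \<Longrightarrow> eqv R q q' \<Longrightarrow> eqv R (p - q) (p' - q')"
proof -
  assume a: "eqv R p p'" "eqv R q q'"
  have "eqv R (p + (- q)) (p' + (- q'))" by (rule eqv_add[OF a(1) eqv_uminus[OF a(2)]])
  then show ?thesis by simp
qed

lemma eqv_mult: "eqv R p p' \<Longrightarrow> eqv R q q' \<Longrightarrow> eqv R (p * q) (p' * q')"
proof -
  assume a: "eqv R p p'" "eqv R q q'"
  have "p * q - p' * q' = (p - p') * q + p' * (q - q')" by (simp add: algebra_simps)
  then show ?thesis using a unfolding eqv_def by (simp add: ideal_left ideal_right ideal_of.add)
qed

lemma eqv_sum: "(\<And>x. x \<in> A \<Longrightarrow> eqv R (f x) (g x)) \<Longrightarrow> eqv R (sum f A) (sum g A)"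
  by (induction A rule: infinite_finite_induct) (auto intro: eqv_add)

lemma eqv_sc: "eqv R p p' \<Longrightarrow> eqv R (sc c p) (sc c p')"
  by (simp add: sc_conv eqv_mult)

lemma eqv_zero_iff: "eqv R p 0 \<longleftrightarrow> p \<in> ideal_of R"
  by (simp add: eqv_def)

lemma eqv_gen: "p - q \<in> R \<Longrightarrow> eqv R p q"
  by (simp add: eqv_def ideal_gen)

lemma hom_ideal:
  assumes "hom f" "\<And>r. r \<in> R \<Longrightarrow> f r \<in> ideal_of R'" "x \<in> ideal_of R"
  shows "f x \<in> ideal_of R'"
  using assms(3)
proof (induction x rule: ideal_of.induct)
  case zero then show ?case using assms(1) by (simp add: hom_lin lin_zero ideal_of.zero)
next
  case (gen r a b) then show ?case using assms by (simp add: hom_mult ideal_mult)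
next
  case (add x y) then show ?case using assms(1) by (simp add: hom_lin lin_add ideal_of.add)
qed

lemma alg_map_hom:
  assumes "hom f" "\<And>r. r \<in> R \<Longrightarrow> f r \<in> ideal_of R'"
  shows "alg_map R R' f"
proof -
  have "eqv R' (f p) (f q)" if "eqv R p q" for p q
    using that hom_ideal[OF assms, where x="p - q"] assms(1) by (simp add: eqv_def hom_lin lin_diff)
  then show ?thesis using assms(1)
    by (simp add: alg_map_def lin_map_def hom_lin lin_add lin_sc hom_mult hom_one)
qed

lemma lin_eqv:
  assumes "lin f" "lin h" "\<And>w. eqv R (f (Poly_Mapping.single w 1)) (h (Poly_Mapping.single w 1))"
  shows "eqv R (f p) (h p)"
proof (induction p rule: pm_induct)
  case zero then show ?case using assms by (simp add: lin_zero)
next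
  case (single w c) then show ?case using assms lin_single[of f w c] lin_single[of h w c]
    by (simp add: eqv_sc)
next
  case (add p q) then show ?case using assms by (simp add: lin_add eqv_add)
qed

lemma Word_plus [simp]: "Word xs + Word ys = Word (xs @ ys)"
  by (simp add: plus_word_def)

lemma Word_zero: "0 = Word []"
  by (simp add: zero_word_def)

lemma letters_plus [simp]: "letters (u + w) = letters u @ letters w"
  by (simp add: plus_word_def)

lemma letters_zero [simp]: "letters 0 = []"
  by (simp add: zero_word_def)

lemma single_Word_prod:
  "(Poly_Mapping.single (Word xs) 1 :: 'v word \<Rightarrow>\<^sub>0 'k::comm_ring_1)
     = prod_list (map (\<lambda>x. Poly_Mapping.single (Word [x]) 1) xs)"
proof (induction xs)
  case Nil then show ?case by (simp flip: Word_zero)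
next
  case (Cons x xs)
  have "Poly_Mapping.single (Word (x # xs)) (1::'k) = Poly_Mapping.single (Word [x]) 1 * Poly_Mapping.single (Word xs) 1"
    by (simp add: mult_single)
  then show ?case using Cons by simp
qed

lemma hom_ext: "hom (ext g)"
  unfolding ext_def by (rule hom_linext) simp_all

lemma ext_single_letter: "ext g (Poly_Mapping.single (Word [x]) 1) = g x"
  by (simp add: ext_def linext_single)

lemma ext_X: "ext g (X i j a) = g (i, j, a)"
  by (simp add: X_def ext_single_letter)

lemma hom_free_eq:
  fixes f h :: "('v word \<Rightarrow>\<^sub>0 'k::comm_ring_1) \<Rightarrow> ('b::monoid_add \<Rightarrow>\<^sub>0 'k)"
  assumes "hom f" "hom h" "\<And>x. f (Poly_Mapping.single (Word [x]) 1) = h (Poly_Mapping.single (Word [x]) 1)"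
  shows "f p = h p"
proof (rule lin_eq[OF hom_lin[OF assms(1)] hom_lin[OF assms(2)]])
  fix w :: "'v word"
  obtain xs where w: "w = Word xs" by (cases w)
  note e = single_Word_prod[of xs, where 'k='k]
  show "f (Poly_Mapping.single w 1) = h (Poly_Mapping.single w 1)"
    by (simp only: w e hom_prod_list[OF assms(1)] hom_prod_list[OF assms(2)] map_map o_def assms(3))
qed

lemma hom_free_eqv:
  fixes f h :: "('v word \<Rightarrow>\<^sub>0 'k::comm_ring_1) \<Rightarrow> ('b::monoid_add \<Rightarrow>\<^sub>0 'k)"
  assumes "hom f" "hom h" "\<And>x. eqv R (f (Poly_Mapping.single (Word [x]) 1)) (h (Poly_Mapping.single (Word [x]) 1))"
  shows "eqv R (f p) (h p)"
proof (rule lin_eqv[OF hom_lin[OF assms(1)] hom_lin[OF assms(2)]])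
  fix w :: "'v word"
  obtain xs where w: "w = Word xs" by (cases w)
  have P: "eqv R (prod_list (map (\<lambda>x. f (Poly_Mapping.single (Word [x]) 1)) ys))
             (prod_list (map (\<lambda>x. h (Poly_Mapping.single (Word [x]) 1)) ys))" for ys
    by (induction ys) (simp_all add: eqv_mult assms(3))
  note e = single_Word_prod[of xs, where 'k='k]
  show "eqv R (f (Poly_Mapping.single w 1)) (h (Poly_Mapping.single w 1))"
    using P by (simp only: w e hom_prod_list[OF assms(1)] hom_prod_list[OF assms(2)] map_map o_def)
qed

section \<open>Tensors\<close>

lemma sum_keys_delta: "(\<Sum>w\<in>Poly_Mapping.keys p. Poly_Mapping.lookup p w * (if w = a then c else 0))
   = Poly_Mapping.lookup p a * (c :: 'k::comm_semiring_1)"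
proof -
  have "(\<Sum>w\<in>Poly_Mapping.keys p. Poly_Mapping.lookup p w * (if w = a then c else 0))
      = (\<Sum>w\<in>Poly_Mapping.keys p. if w = a then Poly_Mapping.lookup p w * c else 0)"
    by (rule sum.cong) auto
  also have "\<dots> = (if a \<in> Poly_Mapping.keys p then Poly_Mapping.lookup p a * c else 0)"
    by (simp add: sum.delta)
  finally show ?thesis by (auto simp: in_keys_iff)
qed

lemma lookup_tens: "Poly_Mapping.lookup (tens (p :: 'a \<Rightarrow>\<^sub>0 'k::comm_semiring_1) q) (a, b) = Poly_Mapping.lookup p a * Poly_Mapping.lookup q b"
proof -
  have l: "Poly_Mapping.lookup (Poly_Mapping.single (w, w') (1::'k)) (a, b)
     = (if w = a then (if w' = b then 1 else 0) else 0)" for w w'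
    by (simp add: lookup_single when_def)
  have inner: "(\<Sum>w'\<in>Poly_Mapping.keys q. Poly_Mapping.lookup q w' * Poly_Mapping.lookup (Poly_Mapping.single (w, w') 1) (a, b))
      = (if w = a then Poly_Mapping.lookup q b else 0)" for w
    by (simp only: l) (cases "w = a", simp_all add: sum_keys_delta)
  show ?thesis
    by (simp add: tens_def lookup_linext inner sum_keys_delta)
qed

lemma tens_eqI: "(\<And>a b. Poly_Mapping.lookup (x :: ('a \<times> 'b) \<Rightarrow>\<^sub>0 'k::zero) (a, b) = Poly_Mapping.lookup y (a, b)) \<Longrightarrow> x = y"
  by (rule poly_mapping_eqI) auto

lemma tens_add_left: "tens (p + p') (q :: 'b \<Rightarrow>\<^sub>0 'k::comm_ring_1) = tens p q + tens p' q"
  by (rule tens_eqI) (simp add: lookup_tens lookup_add distrib_right)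

lemma tens_add_right: "tens (p :: 'a \<Rightarrow>\<^sub>0 'k::comm_ring_1) (q + q') = tens p q + tens p q'"
  by (rule tens_eqI) (simp add: lookup_tens lookup_add distrib_left)

lemma tens_sc_left: "tens (sc c p) (q :: 'b \<Rightarrow>\<^sub>0 'k::comm_ring_1) = sc c (tens p q)"
  by (rule tens_eqI) (simp add: lookup_tens lookup_sc mult.assoc)

lemma tens_sc_right: "tens p (sc c q) = sc c (tens p (q :: 'b \<Rightarrow>\<^sub>0 'k::comm_semiring_1))"
  by (rule tens_eqI) (simp add: lookup_tens lookup_sc mult.left_commute)

lemma tens_zero [simp]: "tens 0 (q :: 'b \<Rightarrow>\<^sub>0 'k::comm_ring_1) = 0" "tens (p :: 'a \<Rightarrow>\<^sub>0 'k::comm_ring_1) 0 = 0"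
  by (rule tens_eqI, simp add: lookup_tens)+

lemma tens_single: "tens (Poly_Mapping.single u (c::'k::comm_ring_1)) (Poly_Mapping.single w d) = Poly_Mapping.single (u, w) (c * d)"
  by (rule tens_eqI) (simp add: lookup_tens lookup_single when_def)

lemma tens_uminus_left: "tens (- p) q = - tens p (q :: 'b \<Rightarrow>\<^sub>0 'k::comm_ring_1)"
  by (rule tens_eqI) (simp add: lookup_tens)

lemma tens_diff_left: "tens (p - p') q = tens p q - tens p' (q :: 'b \<Rightarrow>\<^sub>0 'k::comm_ring_1)"
  by (rule tens_eqI) (simp add: lookup_tens lookup_minus left_diff_distrib)

lemma tens_diff_right: "tens p (q - q') = tens p q - tens p (q' :: 'b \<Rightarrow>\<^sub>0 'k::comm_ring_1)"
  by (rule tens_eqI) (simp add: lookup_tens lookup_minus right_diff_distrib)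

lemma tens_sum_left: "tens (sum f A) (q :: 'b \<Rightarrow>\<^sub>0 'k::comm_ring_1) = (\<Sum>x\<in>A. tens (f x) q)"
  by (induction A rule: infinite_finite_induct) (simp_all add: tens_add_left)

lemma tens_sum_right: "tens (p :: 'a \<Rightarrow>\<^sub>0 'k::comm_ring_1) (sum f A) = (\<Sum>x\<in>A. tens p (f x))"
  by (induction A rule: infinite_finite_induct) (simp_all add: tens_add_right)

lemma lin_tens_left: "lin (\<lambda>p. tens p (q :: 'b \<Rightarrow>\<^sub>0 'k::comm_ring_1))"
  by (simp add: lin_def tens_add_left tens_sc_left)

lemma lin_tens_right: "lin (\<lambda>q. tens (p :: 'a \<Rightarrow>\<^sub>0 'k::comm_ring_1) q)"
  by (simp add: lin_def tens_add_right tens_sc_right)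

lemma tens_one: "tens 1 1 = (1 :: ('a::monoid_add \<times> 'b::monoid_add) \<Rightarrow>\<^sub>0 'k::comm_ring_1)"
  by (simp add: tens_single flip: single_one zero_prod_def)

lemma single_pair_mult: "Poly_Mapping.single (u, w) c * Poly_Mapping.single (u', w') d
   = Poly_Mapping.single (u + u', w + w') (c * d)"
  by (simp add: mult_single plus_prod_def)

lemma tens_mult: "tens p q * tens p' q' = tens (p * p') (q * (q' :: 'b::monoid_add \<Rightarrow>\<^sub>0 'k::comm_ring_1))"
proof -
  have base: "tens (Poly_Mapping.single u 1) (Poly_Mapping.single w 1) * tens p' q'
      = tens (Poly_Mapping.single u 1 * p') (Poly_Mapping.single w 1 * q')" for u w
    by (rule lin2_eq[where F="\<lambda>p' q'. tens (Poly_Mapping.single u 1) (Poly_Mapping.single w 1) * tens p' q'"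
          and G="\<lambda>p' q'. tens (Poly_Mapping.single u 1 * p') (Poly_Mapping.single w 1 * q')"])
       (simp_all add: lin_comp[OF lin_mult_right lin_tens_left] lin_comp[OF lin_mult_right lin_tens_right]
          lin_comp[OF lin_tens_left lin_mult_right] lin_comp[OF lin_tens_right lin_mult_right]
          tens_single single_pair_mult mult_single)
  show ?thesis
    by (rule lin2_eq[where F="\<lambda>p q. tens p q * tens p' q'" and G="\<lambda>p q. tens (p * p') (q * q')"])
       (simp_all add: lin_comp[OF lin_mult_left lin_tens_left] lin_comp[OF lin_mult_left lin_tens_right]
          lin_comp[OF lin_tens_left lin_mult_left] lin_comp[OF lin_tens_right lin_mult_left] base)
qed



lemma tmap_single: "tmap f g (Poly_Mapping.single (u, w) c)
   = sc c (tens (f (Poly_Mapping.single u 1)) (g (Poly_Mapping.single w 1)))"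
  by (simp add: tmap_def linext_single)

lemma lin_tmap: "lin (tmap f g)"
  by (simp add: tmap_def lin_linext)

lemma tmap_tens:
  fixes f :: "('a::monoid_add \<Rightarrow>\<^sub>0 'k::comm_ring_1) \<Rightarrow> ('c::monoid_add \<Rightarrow>\<^sub>0 'k)"
    and g :: "('b::monoid_add \<Rightarrow>\<^sub>0 'k) \<Rightarrow> ('d::monoid_add \<Rightarrow>\<^sub>0 'k)"
  assumes "lin f" "lin g"
  shows "tmap f g (tens p q) = tens (f p) (g q)"
  by (rule lin2_eq[where F="\<lambda>p q. tmap f g (tens p q)" and G="\<lambda>p q. tens (f p) (g q)"])
     (simp_all add: lin_comp[OF lin_tmap lin_tens_left] lin_comp[OF lin_tmap lin_tens_right]
        lin_comp[OF lin_tens_left assms(1)] lin_comp[OF lin_tens_right assms(2)]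
        tens_single tmap_single)

lemma hom_tmap:
  fixes f :: "('a::monoid_add \<Rightarrow>\<^sub>0 'k::comm_ring_1) \<Rightarrow> ('c::monoid_add \<Rightarrow>\<^sub>0 'k)"
    and g :: "('b::monoid_add \<Rightarrow>\<^sub>0 'k) \<Rightarrow> ('d::monoid_add \<Rightarrow>\<^sub>0 'k)"
  assumes "hom f" "hom g"
  shows "hom (tmap f g)"
  unfolding tmap_def
proof (rule hom_linext)
  fix x y :: "'a \<times> 'b"
  obtain u w u' w' where xy: "x = (u, w)" "y = (u', w')" by (cases x, cases y)
  have "Poly_Mapping.single (u + u') (1::'k) = Poly_Mapping.single u 1 * Poly_Mapping.single u' 1"
       "Poly_Mapping.single (w + w') (1::'k) = Poly_Mapping.single w 1 * Poly_Mapping.single w' 1"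
    by (simp_all add: mult_single)
  then show "(case x + y of (u, w) \<Rightarrow> tens (f (Poly_Mapping.single u 1)) (g (Poly_Mapping.single w 1))) =
       (case x of (u, w) \<Rightarrow> tens (f (Poly_Mapping.single u 1)) (g (Poly_Mapping.single w 1))) *
       (case y of (u, w) \<Rightarrow> tens (f (Poly_Mapping.single u 1)) (g (Poly_Mapping.single w 1)))"
    using assms by (simp add: xy plus_prod_def hom_mult tens_mult)
next
  show "(case 0 of (u, w) \<Rightarrow> tens (f (Poly_Mapping.single u 1)) (g (Poly_Mapping.single w 1))) = 1"
    using assms by (simp add: zero_prod_def hom_one tens_one)
qed

lemma lin_assocr: "lin assocr"
  by (simp add: assocr_def lin_linext)

lemma hom_assocr: "hom (assocr :: (('a::monoid_add \<times> 'b::monoid_add) \<times> 'c::monoid_add \<Rightarrow>\<^sub>0 'k::comm_ring_1) \<Rightarrow> _)"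
  unfolding assocr_def
proof (rule hom_linext)
  fix x y :: "('a \<times> 'b) \<times> 'c"
  obtain a b c a' b' c' where xy: "x = ((a, b), c)" "y = ((a', b'), c')" by (cases x, cases y) auto
  show "(case x + y of (x, c) \<Rightarrow> (case x of (a, b) \<Rightarrow> \<lambda>c. Poly_Mapping.single (a, b, c) (1::'k)) c) =
        (case x of (x, c) \<Rightarrow> (case x of (a, b) \<Rightarrow> \<lambda>c. Poly_Mapping.single (a, b, c) 1) c) *
        (case y of (x, c) \<Rightarrow> (case x of (a, b) \<Rightarrow> \<lambda>c. Poly_Mapping.single (a, b, c) 1) c)"
    by (simp add: xy plus_prod_def mult_single)
next
  show "(case 0 of (x, c) \<Rightarrow> (case x of (a, b) \<Rightarrow> \<lambda>c. Poly_Mapping.single (a, b, c) (1::'k)) c) = 1"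
    by (simp add: zero_prod_def) (simp flip: zero_prod_def)
qed

lemma lookup_assocr:
  fixes x :: "(('a \<times> 'b) \<times> 'c) \<Rightarrow>\<^sub>0 'k::comm_ring_1" and a :: 'a and b :: 'b and c :: 'c
  shows "Poly_Mapping.lookup (assocr x) (a, b, c) = Poly_Mapping.lookup x ((a, b), c)"
proof -
  have l: "Poly_Mapping.lookup (case w of (x, c) \<Rightarrow> (case x of (a, b) \<Rightarrow> \<lambda>c. Poly_Mapping.single (a, b, c) 1) c) (a, b, c)
        = (if w = ((a, b), c) then 1 else (0::'k))" for w :: "('a \<times> 'b) \<times> 'c"
  proof -
    obtain a' b' c' where w: "w = ((a', b'), c')" by (cases w) auto
    show ?thesis by (simp add: w lookup_single when_def)
  qed
  show ?thesis by (simp add: assocr_def lookup_linext l sum_keys_delta)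
qed

lemma assocr_tens: "assocr (tens (tens a b) c) = tens a (tens b (c :: 'c \<Rightarrow>\<^sub>0 'k::comm_ring_1))"
proof (rule poly_mapping_eqI)
  fix z :: "'a \<times> 'b \<times> 'c"
  obtain x y t where "z = (x, y, t)" by (cases z) auto
  then show "Poly_Mapping.lookup (assocr (tens (tens a b) c)) z = Poly_Mapping.lookup (tens a (tens b c)) z"
    by (simp add: lookup_assocr lookup_tens mult.assoc)
qed

lemma lin_mulmap: "lin mulmap"
  by (simp add: mulmap_def lin_linext)

lemma mulmap_single: "mulmap (Poly_Mapping.single (u, w) c) = sc c (Poly_Mapping.single (u + w) 1)"
  by (simp add: mulmap_def linext_single)

lemma lcounit_single: "lcounit e (Poly_Mapping.single (u, w) c) = sc c (sc (e (Poly_Mapping.single u 1)) (Poly_Mapping.single w 1))"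
  by (simp add: lcounit_def linext_single)

lemma rcounit_single: "rcounit e (Poly_Mapping.single (u, w) c) = sc c (sc (e (Poly_Mapping.single w 1)) (Poly_Mapping.single u 1))"
  by (simp add: rcounit_def linext_single)

lemma lin_lcounit: "lin (lcounit e)"
  by (simp add: lcounit_def lin_linext)

lemma lin_rcounit: "lin (rcounit e)"
  by (simp add: rcounit_def lin_linext)

lemma mulmap_tens: "mulmap (tens p q) = p * (q :: 'a::monoid_add \<Rightarrow>\<^sub>0 'k::comm_ring_1)"
  by (rule lin2_eq[where F="\<lambda>p q. mulmap (tens p q)" and G="\<lambda>p q. p * q"])
     (simp_all add: lin_comp[OF lin_mulmap lin_tens_left] lin_comp[OF lin_mulmap lin_tens_right]
        lin_mult_left lin_mult_right tens_single mulmap_single mult_single)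

definition flin :: "(('a \<Rightarrow>\<^sub>0 'k::comm_ring_1) \<Rightarrow> 'k) \<Rightarrow> bool" where
  "flin e \<longleftrightarrow> (\<forall>p q. e (p + q) = e p + e q) \<and> (\<forall>c p. e (sc c p) = c * e p)"

lemma lcounit_tens:
  assumes "flin e"
  shows "lcounit e (tens p q) = sc (e p) (q :: 'b::monoid_add \<Rightarrow>\<^sub>0 'k::comm_ring_1)"
proof -
  have l: "lin (\<lambda>p. sc (e p) q)" for q
    using assms by (simp add: lin_def flin_def sc_add_left sc_sc)
  have l2: "lin (\<lambda>q. sc (e p) q)" for p
    by (simp add: lin_def sc_add sc_sc mult.commute)
  show ?thesis
    by (rule lin2_eq[where F="\<lambda>p q. lcounit e (tens p q)" and G="\<lambda>p q. sc (e p) q"])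
       (simp_all add: lin_comp[OF lin_lcounit lin_tens_left] lin_comp[OF lin_lcounit lin_tens_right]
          l l2 tens_single lcounit_single)
qed

lemma rcounit_tens:
  assumes "flin e"
  shows "rcounit e (tens p q) = sc (e q) (p :: 'a::monoid_add \<Rightarrow>\<^sub>0 'k::comm_ring_1)"
proof -
  have l: "lin (\<lambda>q. sc (e q) p)" for p
    using assms by (simp add: lin_def flin_def sc_add_left sc_sc)
  have l2: "lin (\<lambda>p. sc (e q) p)" for q
    by (simp add: lin_def sc_add sc_sc mult.commute)
  show ?thesis
    by (rule lin2_eq[where F="\<lambda>p q. rcounit e (tens p q)" and G="\<lambda>p q. sc (e q) p"])
       (simp_all add: lin_comp[OF lin_rcounit lin_tens_left] lin_comp[OF lin_rcounit lin_tens_right]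
          l l2 tens_single rcounit_single)
qed

lemma hom_lcounit:
  fixes e :: "('a::monoid_add \<Rightarrow>\<^sub>0 'k::comm_ring_1) \<Rightarrow> 'k"
  assumes "\<And>u w. e (Poly_Mapping.single (u + w) 1) = e (Poly_Mapping.single u 1) * e (Poly_Mapping.single w 1)"
    "e 1 = 1"
  shows "hom (lcounit e :: ('a \<times> 'b::monoid_add \<Rightarrow>\<^sub>0 'k) \<Rightarrow> _)"
  unfolding lcounit_def
proof (rule hom_linext)
  fix x y :: "'a \<times> 'b"
  obtain u w u' w' where xy: "x = (u, w)" "y = (u', w')" by (cases x, cases y)
  show "(case x + y of (u, w) \<Rightarrow> sc (e (Poly_Mapping.single u 1)) (Poly_Mapping.single w 1)) =
    (case x of (u, w) \<Rightarrow> sc (e (Poly_Mapping.single u 1)) (Poly_Mapping.single w 1)) *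
    (case y of (u, w) \<Rightarrow> sc (e (Poly_Mapping.single u 1)) (Poly_Mapping.single w 1))"
    by (simp add: xy plus_prod_def assms(1) sc_mult_both mult_single)
next
  show "(case 0 of (u, w) \<Rightarrow> sc (e (Poly_Mapping.single u 1)) (Poly_Mapping.single w (1::'k))) = 1"
    using assms(2) by (simp add: zero_prod_def sc_one_conv)
qed

lemma hom_rcounit:
  fixes e :: "('b::monoid_add \<Rightarrow>\<^sub>0 'k::comm_ring_1) \<Rightarrow> 'k"
  assumes "\<And>u w. e (Poly_Mapping.single (u + w) 1) = e (Poly_Mapping.single u 1) * e (Poly_Mapping.single w 1)"
    "e 1 = 1"
  shows "hom (rcounit e :: ('a::monoid_add \<times> 'b \<Rightarrow>\<^sub>0 'k) \<Rightarrow> _)"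
  unfolding rcounit_def
proof (rule hom_linext)
  fix x y :: "'a \<times> 'b"
  obtain u w u' w' where xy: "x = (u, w)" "y = (u', w')" by (cases x, cases y)
  show "(case x + y of (u, w) \<Rightarrow> sc (e (Poly_Mapping.single w 1)) (Poly_Mapping.single u 1)) =
    (case x of (u, w) \<Rightarrow> sc (e (Poly_Mapping.single w 1)) (Poly_Mapping.single u 1)) *
    (case y of (u, w) \<Rightarrow> sc (e (Poly_Mapping.single w 1)) (Poly_Mapping.single u 1))"
    by (simp add: xy plus_prod_def assms(1) sc_mult_both mult_single)
next
  show "(case 0 of (u, w) \<Rightarrow> sc (e (Poly_Mapping.single w 1)) (Poly_Mapping.single u (1::'k))) = 1"
    using assms(2) by (simp add: zero_prod_def sc_one_conv)
qed

lemma tens_ideal_left: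
  fixes p :: "'a::monoid_add \<Rightarrow>\<^sub>0 'k::comm_ring_1" and q :: "'b::monoid_add \<Rightarrow>\<^sub>0 'k"
  assumes "p \<in> ideal_of R"
  shows "tens p q \<in> ideal_of (trel R R')"
  using assms
proof (induction p rule: ideal_of.induct)
  case zero then show ?case by (simp add: ideal_of.zero)
next
  case (gen r a b)
  have "tens (a * r * b) q = tens a 1 * tens r 1 * tens b q"
    by (simp add: tens_mult)
  moreover have "tens r 1 \<in> trel R R'" using gen by (simp add: trel_def)
  ultimately show ?case by (simp add: ideal_of.gen)
next
  case (add x y) then show ?case by (simp add: tens_add_left ideal_of.add)
qed

lemma tens_ideal_right:
  fixes p :: "'a::monoid_add \<Rightarrow>\<^sub>0 'k::comm_ring_1" and q :: "'b::monoid_add \<Rightarrow>\<^sub>0 'k"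
  assumes "q \<in> ideal_of R'"
  shows "tens p q \<in> ideal_of (trel R R')"
  using assms
proof (induction q rule: ideal_of.induct)
  case zero then show ?case by (simp add: ideal_of.zero)
next
  case (gen r a b)
  have "tens p (a * r * b) = tens p a * tens 1 r * tens 1 b"
    by (simp add: tens_mult)
  moreover have "tens 1 r \<in> trel R R'" using gen by (simp add: trel_def)
  ultimately show ?case by (simp add: ideal_of.gen)
next
  case (add x y) then show ?case by (simp add: tens_add_right ideal_of.add)
qed

lemma eqv_tens_left: "eqv R p p' \<Longrightarrow> eqv (trel R R') (tens p q) (tens p' (q :: 'b::monoid_add \<Rightarrow>\<^sub>0 'k::comm_ring_1))"
  unfolding eqv_def using tens_ideal_left[of "p - p'" R q R'] by (simp add: tens_diff_left)

lemma eqv_tens_right: "eqv R' q q' \<Longrightarrow> eqv (trel R R') (tens (p :: 'a::monoid_add \<Rightarrow>\<^sub>0 'k::comm_ring_1) q) (tens p q')"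
  unfolding eqv_def using tens_ideal_right[of "q - q'" R' p R] by (simp add: tens_diff_right)



declare eqv_trans [trans]

lemma X_gen: "Poly_Mapping.single (Word [(i, j, a)]) 1 = X i j a"
  by (simp add: X_def)

lemma hom_free_eq_X:
  fixes f h :: "(gen word \<Rightarrow>\<^sub>0 'k::comm_ring_1) \<Rightarrow> ('b::monoid_add \<Rightarrow>\<^sub>0 'k)"
  assumes "hom f" "hom h" "\<And>i j a. f (X i j a) = h (X i j a)"
  shows "f p = h p"
proof (rule hom_free_eq[OF assms(1,2)])
  fix x :: gen
  obtain i j a where "x = (i, j, a)" by (cases x) auto
  then show "f (Poly_Mapping.single (Word [x]) 1) = h (Poly_Mapping.single (Word [x]) 1)"
    using assms(3)[of i j a] by (simp add: X_gen)
qed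

lemma hom_free_eqv_X:
  fixes f h :: "(gen word \<Rightarrow>\<^sub>0 'k::comm_ring_1) \<Rightarrow> ('b::monoid_add \<Rightarrow>\<^sub>0 'k)"
  assumes "hom f" "hom h" "\<And>i j a. eqv R (f (X i j a)) (h (X i j a))"
  shows "eqv R (f p) (h p)"
proof (rule hom_free_eqv[OF assms(1,2)])
  fix x :: gen
  obtain i j a where "x = (i, j, a)" by (cases x) auto
  then show "eqv R (f (Poly_Mapping.single (Word [x]) 1)) (h (Poly_Mapping.single (Word [x]) 1))"
    using assms(3)[of i j a] by (simp add: X_gen)
qed

lemma D_X: "ext (gcop K) (X i j a) = (\<Sum>k\<in>{1..K}. tens (X i k a) (X k j a))"
  by (simp add: ext_X gcop_def)

lemma hom_D: "hom (ext (gcop K))"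
  by (rule hom_ext)

lemma lin_D: "lin (ext (gcop K))"
  by (rule hom_lin[OF hom_ext])

lemma sum_swap3: "(\<Sum>l\<in>L. \<Sum>k\<in>K. \<Sum>k'\<in>K'. f l k k') = (\<Sum>k\<in>K. \<Sum>k'\<in>K'. \<Sum>l\<in>L. (f l k k' :: 'a::comm_monoid_add))"
proof -
  have "(\<Sum>l\<in>L. \<Sum>k\<in>K. \<Sum>k'\<in>K'. f l k k') = (\<Sum>k\<in>K. \<Sum>l\<in>L. \<Sum>k'\<in>K'. f l k k')"
    by (rule sum.swap)
  also have "\<dots> = (\<Sum>k\<in>K. \<Sum>k'\<in>K'. \<Sum>l\<in>L. f l k k')"
    by (simp only: sum.swap[of _ K' L])
  finally show ?thesis .
qed

lemma coassoc:
  "assocr (tmap (ext (gcop K1)) id (ext (gcop K2) p))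
     = tmap id (ext (gcop K2)) (ext (gcop K1) (p :: gen word \<Rightarrow>\<^sub>0 'k::field))"
proof (rule hom_free_eq_X[where f="\<lambda>p. assocr (tmap (ext (gcop K1)) id (ext (gcop K2) p))"
      and h="\<lambda>p. tmap id (ext (gcop K2)) (ext (gcop K1) p)"])
  show "hom (\<lambda>p. assocr (tmap (ext (gcop K1)) id (ext (gcop K2) p)))"
    by (rule hom_comp[OF hom_assocr hom_comp[OF hom_tmap[OF hom_D hom_id(1)] hom_D]])
  show "hom (\<lambda>p. tmap id (ext (gcop K2)) (ext (gcop K1) p))"
    by (rule hom_comp[OF hom_tmap[OF hom_id(1) hom_D] hom_D])
  fix i j a
  have "assocr (tmap (ext (gcop K1)) id (ext (gcop K2) (X i j a)))
      = (\<Sum>k\<in>{1..K2}. \<Sum>k'\<in>{1..K1}. tens (X i k' a) (tens (X k' k a) (X k j a :: gen word \<Rightarrow>\<^sub>0 'k)))"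
    by (simp add: D_X lin_sum[OF lin_tmap] tmap_tens[OF lin_D lin_id(1)] tens_sum_left
        lin_sum[OF lin_assocr] assocr_tens)
  also have "\<dots> = (\<Sum>k'\<in>{1..K1}. \<Sum>k\<in>{1..K2}. tens (X i k' a) (tens (X k' k a) (X k j a)))"
    by (rule sum.swap)
  also have "\<dots> = tmap id (ext (gcop K2)) (ext (gcop K1) (X i j a))"
    by (simp add: D_X lin_sum[OF lin_tmap] tmap_tens[OF lin_id(1) lin_D] tens_sum_right)
  finally show "assocr (tmap (ext (gcop K1)) id (ext (gcop K2) (X i j a)))
      = tmap id (ext (gcop K2)) (ext (gcop K1) (X i j a :: gen word \<Rightarrow>\<^sub>0 'k))" .
qed

lemma hom_if01: "hom f \<Longrightarrow> f (if c then 1 else 0) = (if c then 1 else 0)"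
  by (simp add: hom_one hom_lin lin_zero)

lemma tens_if01_right: "tens (x :: 'a \<Rightarrow>\<^sub>0 'k::comm_ring_1) (if c then (1 :: 'b::monoid_add \<Rightarrow>\<^sub>0 'k) else 0) = (if c then tens x 1 else 0)"
  by simp

lemma tens_if01_left: "tens (if c then (1 :: 'a::monoid_add \<Rightarrow>\<^sub>0 'k::comm_ring_1) else 0) (y :: 'b \<Rightarrow>\<^sub>0 'k) = (if c then tens 1 y else 0)"
  by simp

lemma tens_if01_1: "tens (if c then 1 else 0) (1 :: 'b::monoid_add \<Rightarrow>\<^sub>0 'k::comm_ring_1)
   = (if c then 1 else (0 :: ('a::monoid_add \<times> 'b) \<Rightarrow>\<^sub>0 'k))"
  by (cases c) (simp_all add: tens_one)

lemma tens_1_if01: "tens (1 :: 'a::monoid_add \<Rightarrow>\<^sub>0 'k::comm_ring_1) (if c then 1 else 0)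
   = (if c then 1 else (0 :: ('a \<times> 'b::monoid_add) \<Rightarrow>\<^sub>0 'k))"
  by (cases c) (simp_all add: tens_one)

lemma X_out_mem: "\<not> (i \<in> {1..p} \<and> j \<in> {1..q}) \<Longrightarrow> X i j a \<in> hrels p q"
  unfolding hrels_def by (intro UnI1) blast

lemma X_out: "\<not> (i \<in> {1..p} \<and> j \<in> {1..q}) \<Longrightarrow> X i j a \<in> ideal_of (hrels p q)"
  by (rule ideal_gen[OF X_out_mem])

lemma rel1_mem: "i \<in> {1..p} \<Longrightarrow> i' \<in> {1..p} \<Longrightarrow>
   (\<Sum>l\<in>{1..q}. X i l a * X i' l (Suc a)) - (if i = i' then 1 else 0) \<in> hrels p q"
  unfolding hrels_def by (intro UnI1 UnI2) blast

lemma rel2_mem: "j \<in> {1..q} \<Longrightarrow> j' \<in> {1..q} \<Longrightarrow>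
   (\<Sum>l\<in>{1..p}. X l j (Suc a) * X l j' a) - (if j = j' then 1 else 0) \<in> hrels p q"
  unfolding hrels_def by (intro UnI2) blast

lemma D_rel1:
  "ext (gcop K) (\<Sum>l\<in>L. X i l a * X i' l b)
     = (\<Sum>k\<in>{1..K}. \<Sum>k'\<in>{1..K}. tens (X i k a * X i' k' b) (\<Sum>l\<in>L. X k l a * X k' l b :: gen word \<Rightarrow>\<^sub>0 'k::field))"
proof -
  have "ext (gcop K) (\<Sum>l\<in>L. X i l a * X i' l b)
      = (\<Sum>l\<in>L. \<Sum>k\<in>{1..K}. \<Sum>k'\<in>{1..K}. tens (X i k a * X i' k' b) (X k l a * X k' l b :: gen word \<Rightarrow>\<^sub>0 'k))"
    by (simp add: hom_sum[OF hom_D] hom_mult[OF hom_D] D_X sum_product tens_mult)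
  also have "\<dots> = (\<Sum>k\<in>{1..K}. \<Sum>k'\<in>{1..K}. \<Sum>l\<in>L. tens (X i k a * X i' k' b) (X k l a * X k' l b))"
    by (rule sum_swap3)
  finally show ?thesis by (simp add: tens_sum_right)
qed

lemma D_rel2:
  "ext (gcop K) (\<Sum>l\<in>L. X l j b * X l j' a)
     = (\<Sum>k\<in>{1..K}. \<Sum>k'\<in>{1..K}. tens (\<Sum>l\<in>L. X l k b * X l k' a) (X k j b * X k' j' a :: gen word \<Rightarrow>\<^sub>0 'k::field))"
proof -
  have "ext (gcop K) (\<Sum>l\<in>L. X l j b * X l j' a)
      = (\<Sum>l\<in>L. \<Sum>k\<in>{1..K}. \<Sum>k'\<in>{1..K}. tens (X l k b * X l k' a) (X k j b * X k' j' a :: gen word \<Rightarrow>\<^sub>0 'k))"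
    by (simp add: hom_sum[OF hom_D] hom_mult[OF hom_D] D_X sum_product tens_mult)
  also have "\<dots> = (\<Sum>k\<in>{1..K}. \<Sum>k'\<in>{1..K}. \<Sum>l\<in>L. tens (X l k b * X l k' a) (X k j b * X k' j' a))"
    by (rule sum_swap3)
  finally show ?thesis by (simp add: tens_sum_left)
qed

lemma sum_delta_if: "k \<in> S \<Longrightarrow> finite S \<Longrightarrow> (\<Sum>k'\<in>S. if k = k' then f k' else 0) = f k"
  by (simp add: sum.delta)

lemma alg_map_D: "alg_map (hrels p q) (trel (hrels p K) (hrels K q)) (ext (gcop K) :: (gen word \<Rightarrow>\<^sub>0 'k::field) \<Rightarrow> _)"
proof (rule alg_map_hom[OF hom_D])
  fix r :: "gen word \<Rightarrow>\<^sub>0 'k"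
  assume "r \<in> hrels p q"
  then consider (out) i j a where "r = X i j a" "\<not> (i \<in> {1..p} \<and> j \<in> {1..q})"
    | (r1) i i' a where "r = (\<Sum>l\<in>{1..q}. X i l a * X i' l (Suc a)) - (if i = i' then 1 else 0)" "i \<in> {1..p}" "i' \<in> {1..p}"
    | (r2) j j' a where "r = (\<Sum>l\<in>{1..p}. X l j (Suc a) * X l j' a) - (if j = j' then 1 else 0)" "j \<in> {1..q}" "j' \<in> {1..q}"
    unfolding hrels_def by blast
  then show "ext (gcop K) r \<in> ideal_of (trel (hrels p K) (hrels K q))"
  proof cases
    case out
    show ?thesis unfolding out(1) D_X
    proof (rule ideal_sum)
      fix k assume "k \<in> {1..K}"
      show "tens (X i k a) (X k j a) \<in> ideal_of (trel (hrels p K) (hrels K q))"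
      proof (cases "i \<in> {1..p}")
        case True
        then have "j \<notin> {1..q}" using out by blast
        then show ?thesis by (intro tens_ideal_right X_out) blast
      next
        case False
        then show ?thesis by (intro tens_ideal_left X_out) blast
      qed
    qed
  next
    case r1
    let ?T = "trel (hrels p K) (hrels K q)"
    have "eqv ?T (\<Sum>k\<in>{1..K}. \<Sum>k'\<in>{1..K}. tens (X i k a * X i' k' (Suc a)) (\<Sum>l\<in>{1..q}. X k l a * X k' l (Suc a) :: gen word \<Rightarrow>\<^sub>0 'k))
           (\<Sum>k\<in>{1..K}. \<Sum>k'\<in>{1..K}. tens (X i k a * X i' k' (Suc a)) (if k = k' then 1 else 0))"
      by (intro eqv_sum eqv_tens_right eqv_gen rel1_mem) auto
    also have "(\<Sum>k\<in>{1..K}. \<Sum>k'\<in>{1..K}. tens (X i k a * X i' k' (Suc a)) (if k = k' then 1 else 0))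
        = tens (\<Sum>k\<in>{1..K}. X i k a * X i' k (Suc a)) (1 :: gen word \<Rightarrow>\<^sub>0 'k)"
      by (simp add: tens_if01_right sum_delta_if tens_sum_left cong: sum.cong) (rule sum.cong; simp)
    also have "eqv ?T \<dots> (tens (if i = i' then 1 else 0) 1)"
      by (intro eqv_tens_left eqv_gen rel1_mem r1)
    finally have "eqv ?T (ext (gcop K) (\<Sum>l\<in>{1..q}. X i l a * (X i' l (Suc a) :: gen word \<Rightarrow>\<^sub>0 'k))) (if i = i' then 1 else 0)"
      by (simp only: D_rel1 tens_if01_1)
    then have "eqv ?T (ext (gcop K) r) ((if i = i' then 1 else 0) - (if i = i' then 1 else 0))"
      unfolding r1(1) lin_diff[OF lin_D] hom_if01[OF hom_D] by (rule eqv_diff[OF _ eqv_refl])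
    then show ?thesis by (simp only: diff_self eqv_zero_iff)
  next
    case r2
    let ?T = "trel (hrels p K) (hrels K q)"
    have "eqv ?T (\<Sum>k\<in>{1..K}. \<Sum>k'\<in>{1..K}. tens (\<Sum>l\<in>{1..p}. X l k (Suc a) * X l k' a) (X k j (Suc a) * X k' j' a :: gen word \<Rightarrow>\<^sub>0 'k))
           (\<Sum>k\<in>{1..K}. \<Sum>k'\<in>{1..K}. tens (if k = k' then 1 else 0) (X k j (Suc a) * X k' j' a))"
      by (intro eqv_sum eqv_tens_left eqv_gen rel2_mem) auto
    also have "(\<Sum>k\<in>{1..K}. \<Sum>k'\<in>{1..K}. tens (if k = k' then 1 else 0) (X k j (Suc a) * X k' j' a))
        = tens (1 :: gen word \<Rightarrow>\<^sub>0 'k) (\<Sum>k\<in>{1..K}. X k j (Suc a) * X k j' a)"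
      by (simp add: tens_if01_left sum_delta_if tens_sum_right cong: sum.cong) (rule sum.cong; simp)
    also have "eqv ?T \<dots> (tens 1 (if j = j' then 1 else 0))"
      by (intro eqv_tens_right eqv_gen rel2_mem r2)
    finally have "eqv ?T (ext (gcop K) (\<Sum>l\<in>{1..p}. X l j (Suc a) * (X l j' a :: gen word \<Rightarrow>\<^sub>0 'k))) (if j = j' then 1 else 0)"
      by (simp only: D_rel2 tens_1_if01)
    then have "eqv ?T (ext (gcop K) r) ((if j = j' then 1 else 0) - (if j = j' then 1 else 0))"
      unfolding r2(1) lin_diff[OF lin_D] hom_if01[OF hom_D] by (rule eqv_diff[OF _ eqv_refl])
    then show ?thesis by (simp only: diff_self eqv_zero_iff)
  qed
qed



section \<open>The counit\<close>

definition chi :: "nat \<Rightarrow> gen word \<Rightarrow> 'k::field" where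
  "chi K w = prod_list (map (\<lambda>(i, j, a). if i = j \<and> i \<in> {1..K} then 1 else 0) (letters w))"

definition Eh :: "nat \<Rightarrow> (gen word \<Rightarrow>\<^sub>0 'k::field) \<Rightarrow> (gen word \<Rightarrow>\<^sub>0 'k)" where
  "Eh K = linext (\<lambda>w. Poly_Mapping.single 0 (chi K w))"

lemma heps_Eh: "heps K p = Poly_Mapping.lookup (Eh K p) 0"
  by (simp add: heps_def Eh_def lookup_linext chi_def)

lemma Eh_eq: "Eh K p = Poly_Mapping.single 0 (heps K p)"
proof (rule poly_mapping_eqI)
  fix z :: "gen word"
  have "Poly_Mapping.keys (Eh K p) \<subseteq> {0}"
    using keys_linext[of "\<lambda>w. Poly_Mapping.single 0 (chi K w)" p] by (auto simp: Eh_def split: if_splits)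
  then show "Poly_Mapping.lookup (Eh K p) z = Poly_Mapping.lookup (Poly_Mapping.single 0 (heps K p)) z"
    by (cases "z = 0") (auto simp: heps_Eh lookup_single in_keys_iff)
qed

lemma hom_Eh: "hom (Eh K)"
  unfolding Eh_def
  by (rule hom_linext) (simp_all add: chi_def mult_single)

lemma heps_add: "heps K (p + q) = heps K p + heps K q"
  by (simp add: heps_Eh hom_lin[OF hom_Eh] lin_add lookup_add)

lemma heps_sc: "heps K (sc c p) = c * heps K p"
  by (simp add: heps_Eh hom_lin[OF hom_Eh] lin_sc lookup_sc)

lemma heps_mult: "heps K (p * q) = heps K p * heps K q"
proof -
  have "Eh K (p * q) = Poly_Mapping.single 0 (heps K p * heps K q)"
    using hom_mult[OF hom_Eh, of K p q] by (simp add: Eh_eq mult_single)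
  then show ?thesis by (simp add: heps_Eh)
qed

lemma heps_one: "heps K 1 = 1"
  by (simp add: heps_Eh hom_one[OF hom_Eh])

lemma heps_zero: "heps K 0 = 0"
  using heps_sc[of K 0 0] by simp

lemma heps_diff: "heps K (p - q) = heps K p - heps K q"
  using heps_add[of K "p - q" q] by simp

lemma heps_sum: "heps K (sum f A) = (\<Sum>x\<in>A. heps K (f x))"
  by (induction A rule: infinite_finite_induct) (simp_all add: heps_zero heps_add)

lemma heps_X: "heps K (X i j a) = (if i = j \<and> i \<in> {1..K} then 1 else 0)"
  by (simp add: heps_Eh Eh_def X_def linext_single chi_def sc_single)

lemma heps_if01: "heps K (if c then 1 else 0) = (if c then 1 else 0)"
  by (simp add: heps_one heps_zero)

lemma flin_heps: "flin (heps K)"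
  by (simp add: flin_def heps_add heps_sc)

lemma heps_single_mult: "heps K (Poly_Mapping.single (u + w) 1) = heps K (Poly_Mapping.single u 1) * heps K (Poly_Mapping.single w 1)"
  by (simp add: heps_mult flip: mult_single[of u "1::'a::field" w 1, simplified])

lemma sum_delta_c: "i \<in> S \<Longrightarrow> finite S \<Longrightarrow> (\<Sum>l\<in>S. if i = l then c else 0) = c"
  by (simp add: sum.delta')

lemma delta_sum1: "i \<in> {1..(K::nat)} \<Longrightarrow> i' \<in> {1..K} \<Longrightarrow>
  (\<Sum>l\<in>{1..K}. (if i = l \<and> i \<in> {1..K} then 1 else 0) * (if i' = l \<and> i' \<in> {1..K} then 1 else 0))
   = (if i = i' then 1 else (0::'k::field))"
proof -
  assume a: "i \<in> {1..K}" "i' \<in> {1..K}"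
  have "(\<Sum>l\<in>{1..K}. (if i = l \<and> i \<in> {1..K} then 1 else 0) * (if i' = l \<and> i' \<in> {1..K} then 1 else 0))
      = (\<Sum>l\<in>{1..K}. if i = l then (if i = i' then 1 else 0) else (0::'k))"
    by (rule sum.cong) (use a in auto)
  also have "\<dots> = (if i = i' then 1 else 0)" by (rule sum_delta_c[OF a(1)]) simp
  finally show ?thesis .
qed

lemma delta_sum2: "j \<in> {1..(K::nat)} \<Longrightarrow> j' \<in> {1..K} \<Longrightarrow>
  (\<Sum>l\<in>{1..K}. (if l = j \<and> l \<in> {1..K} then 1 else 0) * (if l = j' \<and> l \<in> {1..K} then 1 else 0))
   = (if j = j' then 1 else (0::'k::field))"
proof -
  assume a: "j \<in> {1..K}" "j' \<in> {1..K}"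
  have "(\<Sum>l\<in>{1..K}. (if l = j \<and> l \<in> {1..K} then 1 else 0) * (if l = j' \<and> l \<in> {1..K} then 1 else 0))
      = (\<Sum>l\<in>{1..K}. if j = l then (if j = j' then 1 else 0) else (0::'k))"
    by (rule sum.cong) (use a in auto)
  also have "\<dots> = (if j = j' then 1 else 0)" by (rule sum_delta_c[OF a(1)]) simp
  finally show ?thesis .
qed

lemma heps_rel: "r \<in> hrels K K \<Longrightarrow> heps K r = (0::'k::field)"
proof -
  assume "r \<in> hrels K K"
  then consider (out) i j a where "r = X i j a" "\<not> (i \<in> {1..K} \<and> j \<in> {1..K})"
    | (r1) i i' a where "r = (\<Sum>l\<in>{1..K}. X i l a * X i' l (Suc a)) - (if i = i' then 1 else 0)" "i \<in> {1..K}" "i' \<in> {1..K}"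
    | (r2) j j' a where "r = (\<Sum>l\<in>{1..K}. X l j (Suc a) * X l j' a) - (if j = j' then 1 else 0)" "j \<in> {1..K}" "j' \<in> {1..K}"
    unfolding hrels_def by blast
  then show ?thesis
  proof cases
    case out then show ?thesis by (auto simp: heps_X)
  next
    case r1
    show ?thesis unfolding r1(1)
      by (simp only: heps_diff heps_sum heps_mult heps_X heps_if01 delta_sum1[OF r1(2) r1(3)] diff_self)
  next
    case r2
    show ?thesis unfolding r2(1)
      by (simp only: heps_diff heps_sum heps_mult heps_X heps_if01 delta_sum2[OF r2(2) r2(3)] diff_self)
  qed
qed

lemma heps_ideal: "x \<in> ideal_of (hrels K K) \<Longrightarrow> heps K x = (0::'k::field)"
proof (induction x rule: ideal_of.induct)
  case zero then show ?case by (simp add: heps_zero)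
next
  case (gen r a b) then show ?case by (simp add: heps_mult heps_rel)
next
  case (add x y) then show ?case by (simp add: heps_add)
qed

lemma char_map_heps: "char_map (hrels K K) (heps K :: (gen word \<Rightarrow>\<^sub>0 'k::field) \<Rightarrow> 'k)"
proof -
  have "heps K p = heps K q" if "eqv (hrels K K) p q" for p q :: "gen word \<Rightarrow>\<^sub>0 'k"
  proof -
    have "heps K (p - q) = 0" using that by (simp add: eqv_def heps_ideal)
    then show ?thesis by (simp add: heps_diff)
  qed
  then show ?thesis
    unfolding char_map_def by (simp add: heps_add heps_sc heps_mult heps_one)
qed

lemma sc_if01: "sc (if c then 1 else 0) x = (if c then x else 0)"
  by simp

lemma lcounit_D: "eqv (hrels K q) (lcounit (heps K) (ext (gcop K) p)) (p :: gen word \<Rightarrow>\<^sub>0 'k::field)"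
proof (rule hom_free_eqv_X[where f="\<lambda>p. lcounit (heps K) (ext (gcop K) p)" and h="\<lambda>p. p"])
  show "hom (\<lambda>p. lcounit (heps K) (ext (gcop K) p) :: gen word \<Rightarrow>\<^sub>0 'k)"
    by (rule hom_comp[OF hom_lcounit[OF heps_single_mult heps_one] hom_D])
  show "hom (\<lambda>p :: gen word \<Rightarrow>\<^sub>0 'k. p)" by (rule hom_id)
  fix i j a
  have "lcounit (heps K) (ext (gcop K) (X i j a)) = (\<Sum>k\<in>{1..K}. if i = k \<and> i \<in> {1..K} then X k j a else (0 :: gen word \<Rightarrow>\<^sub>0 'k))"
    by (simp add: D_X lin_sum[OF lin_lcounit] lcounit_tens[OF flin_heps] heps_X sc_if01 del: atLeastAtMost_iff)
  also have "\<dots> = (if i \<in> {1..K} then X i j a else 0)"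
    by (simp add: sum.delta del: atLeastAtMost_iff)
  also have "eqv (hrels K q) \<dots> (X i j a)"
  proof (cases "i \<in> {1..K}")
    case False
    then have "- X i j a \<in> ideal_of (hrels K q)" by (intro ideal_uminus X_out) blast
    then show ?thesis using False by (simp add: eqv_def ideal_of.zero)
  qed simp
  finally show "eqv (hrels K q) (lcounit (heps K) (ext (gcop K) (X i j a))) (X i j a :: gen word \<Rightarrow>\<^sub>0 'k)" .
qed

lemma rcounit_D: "eqv (hrels q K) (rcounit (heps K) (ext (gcop K) p)) (p :: gen word \<Rightarrow>\<^sub>0 'k::field)"
proof (rule hom_free_eqv_X[where f="\<lambda>p. rcounit (heps K) (ext (gcop K) p)" and h="\<lambda>p. p"])
  show "hom (\<lambda>p. rcounit (heps K) (ext (gcop K) p) :: gen word \<Rightarrow>\<^sub>0 'k)"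
    by (rule hom_comp[OF hom_rcounit[OF heps_single_mult heps_one] hom_D])
  show "hom (\<lambda>p :: gen word \<Rightarrow>\<^sub>0 'k. p)" by (rule hom_id)
  fix i j a
  have "rcounit (heps K) (ext (gcop K) (X i j a)) = (\<Sum>k\<in>{1..K}. if k = j \<and> k \<in> {1..K} then X i k a else (0 :: gen word \<Rightarrow>\<^sub>0 'k))"
    by (simp add: D_X lin_sum[OF lin_rcounit] rcounit_tens[OF flin_heps] heps_X sc_if01 del: atLeastAtMost_iff)
  also have "\<dots> = (\<Sum>k\<in>{1..K}. if j = k then X i k a else (0 :: gen word \<Rightarrow>\<^sub>0 'k))"
    by (rule sum.cong) auto
  also have "\<dots> = (if j \<in> {1..K} then X i j a else 0)"
    by (simp add: sum.delta del: atLeastAtMost_iff)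
  also have "eqv (hrels q K) \<dots> (X i j a)"
  proof (cases "j \<in> {1..K}")
    case False
    then have "- X i j a \<in> ideal_of (hrels q K)" by (intro ideal_uminus X_out) blast
    then show ?thesis using False by (simp add: eqv_def ideal_of.zero)
  qed simp
  finally show "eqv (hrels q K) (rcounit (heps K) (ext (gcop K) (X i j a))) (X i j a :: gen word \<Rightarrow>\<^sub>0 'k)" .
qed



section \<open>The antipode-like map S\<close>

definition swp :: "gen \<Rightarrow> gen" where
  "swp x = (case x of (i, j, a) \<Rightarrow> (j, i, Suc a))"

definition Santi :: "(gen word \<Rightarrow>\<^sub>0 'k::field) \<Rightarrow> (gen word \<Rightarrow>\<^sub>0 'k)" where
  "Santi = linext (\<lambda>w. Poly_Mapping.single (Word (rev (map swp (letters w)))) 1)"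

lemma lin_Santi: "lin Santi"
  by (simp add: Santi_def lin_linext)

lemma Santi_single: "Santi (Poly_Mapping.single w c) = Poly_Mapping.single (Word (rev (map swp (letters w)))) c"
  by (simp add: Santi_def linext_single sc_single)

lemma Santi_mult: "Santi (p * q) = Santi q * Santi (p :: gen word \<Rightarrow>\<^sub>0 'k::field)"
  by (rule lin2_eq[where F="\<lambda>p q. Santi (p * q)" and G="\<lambda>p q. Santi q * Santi p"])
     (simp_all add: lin_comp[OF lin_Santi lin_mult_left] lin_comp[OF lin_Santi lin_mult_right]
        lin_comp[OF lin_mult_right lin_Santi] lin_comp[OF lin_mult_left lin_Santi]
        mult_single Santi_single)

lemma Santi_one: "Santi 1 = 1"
  by (simp add: Santi_single flip: single_one Word_zero)

lemma Santi_X: "Santi (X i j a) = X j i (Suc a)"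
  by (simp add: X_def Santi_single swp_def)

lemma Santi_zero: "Santi 0 = 0"
  by (rule lin_zero[OF lin_Santi])

lemma Santi_if01: "Santi (if c then 1 else 0) = (if c then 1 else 0)"
  by (simp add: Santi_one Santi_zero)

lemma Santi_rel: "r \<in> hrels q p \<Longrightarrow> Santi r \<in> hrels p (q :: nat)"
  for r :: "gen word \<Rightarrow>\<^sub>0 'k::field"
proof -
  assume "r \<in> hrels q p"
  then consider (out) i j a where "r = X i j a" "\<not> (i \<in> {1..q} \<and> j \<in> {1..p})"
    | (r1) i i' a where "r = (\<Sum>l\<in>{1..p}. X i l a * X i' l (Suc a)) - (if i = i' then 1 else 0)" "i \<in> {1..q}" "i' \<in> {1..q}"
    | (r2) j j' a where "r = (\<Sum>l\<in>{1..q}. X l j (Suc a) * X l j' a) - (if j = j' then 1 else 0)" "j \<in> {1..p}" "j' \<in> {1..p}"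
    unfolding hrels_def by blast
  then show ?thesis
  proof cases
    case out show ?thesis unfolding out(1) Santi_X by (rule X_out_mem) (use out(2) in auto)
  next
    case r1
    have e: "Santi r = (\<Sum>l\<in>{1..p}. X l i' (Suc (Suc a)) * X l i (Suc a)) - (if i = i' then 1 else 0)"
      unfolding r1(1) by (simp add: lin_diff[OF lin_Santi] lin_sum[OF lin_Santi] Santi_mult Santi_X Santi_if01)
    have f: "(if i' = i then 1 else 0) = (if i = i' then 1 else (0 :: gen word \<Rightarrow>\<^sub>0 'k))" by auto
    have m: "(\<Sum>l\<in>{1..p}. X l i' (Suc (Suc a)) * X l i (Suc a)) - (if i' = i then 1 else (0 :: gen word \<Rightarrow>\<^sub>0 'k)) \<in> hrels p q"
      by (rule rel2_mem) (use r1 in auto)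
    show ?thesis unfolding e using m by (simp only: f)
  next
    case r2
    have e: "Santi r = (\<Sum>l\<in>{1..q}. X j' l (Suc a) * X j l (Suc (Suc a))) - (if j = j' then 1 else 0)"
      unfolding r2(1) by (simp add: lin_diff[OF lin_Santi] lin_sum[OF lin_Santi] Santi_mult Santi_X Santi_if01)
    have f: "(if j' = j then 1 else 0) = (if j = j' then 1 else (0 :: gen word \<Rightarrow>\<^sub>0 'k))" by auto
    have m: "(\<Sum>l\<in>{1..q}. X j' l (Suc a) * X j l (Suc (Suc a))) - (if j' = j then 1 else (0 :: gen word \<Rightarrow>\<^sub>0 'k)) \<in> hrels p q"
      by (rule rel1_mem) (use r2 in auto)
    show ?thesis unfolding e using m by (simp only: f)
  qed
qed

lemma Santi_ideal: "x \<in> ideal_of (hrels q p) \<Longrightarrow> Santi x \<in> ideal_of (hrels p (q :: nat))"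
proof (induction x rule: ideal_of.induct)
  case zero then show ?case by (simp add: Santi_zero ideal_of.zero)
next
  case (gen r a b)
  have "Santi (a * r * b) = Santi b * Santi r * Santi a" by (simp add: Santi_mult mult.assoc)
  then show ?case using ideal_of.gen[OF Santi_rel[OF gen]] by simp
next
  case (add x y) then show ?case by (simp add: lin_add[OF lin_Santi] ideal_of.add)
qed

lemma lin_map_Santi: "lin_map (hrels q p) (hrels p (q :: nat)) Santi"
  unfolding lin_map_def
  by (simp add: eqv_def lin_add[OF lin_Santi] lin_sc[OF lin_Santi] Santi_ideal flip: lin_diff[OF lin_Santi])

lemma step_left: "mulmap (tmap id Santi (tens P Q * y)) = P * mulmap (tmap id Santi y) * Santi (Q :: gen word \<Rightarrow>\<^sub>0 'k::field)"
proof (rule lin_eq[where f="\<lambda>y. mulmap (tmap id Santi (tens P Q * y))" and h="\<lambda>y. P * mulmap (tmap id Santi y) * Santi Q"])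
  show "lin (\<lambda>y. mulmap (tmap id Santi (tens P Q * y)))"
    by (rule lin_comp[OF lin_mulmap lin_comp[OF lin_tmap lin_mult_right]])
  show "lin (\<lambda>y. P * mulmap (tmap id Santi y) * Santi Q)"
    by (rule lin_comp[OF lin_mult_left lin_comp[OF lin_mult_right lin_comp[OF lin_mulmap lin_tmap]]])
  fix w :: "gen word \<times> gen word"
  obtain u v where w: "w = (u, v)" by (cases w)
  have s: "Poly_Mapping.single (u, v) (1::'k) = tens (Poly_Mapping.single u 1) (Poly_Mapping.single v 1)"
    by (simp add: tens_single)
  show "mulmap (tmap id Santi (tens P Q * Poly_Mapping.single w 1)) = P * mulmap (tmap id Santi (Poly_Mapping.single w 1)) * Santi Q"
    by (simp add: w s tens_mult tmap_tens[OF lin_id(1) lin_Santi] mulmap_tens Santi_mult mult.assoc)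
qed

lemma step_right: "mulmap (tmap Santi id (y * tens P Q)) = Santi P * mulmap (tmap Santi id y) * (Q :: gen word \<Rightarrow>\<^sub>0 'k::field)"
proof (rule lin_eq[where f="\<lambda>y. mulmap (tmap Santi id (y * tens P Q))" and h="\<lambda>y. Santi P * mulmap (tmap Santi id y) * Q"])
  show "lin (\<lambda>y. mulmap (tmap Santi id (y * tens P Q)))"
    by (rule lin_comp[OF lin_mulmap lin_comp[OF lin_tmap lin_mult_left]])
  show "lin (\<lambda>y. Santi P * mulmap (tmap Santi id y) * Q)"
    by (rule lin_comp[OF lin_mult_left lin_comp[OF lin_mult_right lin_comp[OF lin_mulmap lin_tmap]]])
  fix w :: "gen word \<times> gen word"
  obtain u v where w: "w = (u, v)" by (cases w)
  have s: "Poly_Mapping.single (u, v) (1::'k) = tens (Poly_Mapping.single u 1) (Poly_Mapping.single v 1)"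
    by (simp add: tens_single)
  show "mulmap (tmap Santi id (Poly_Mapping.single w 1 * tens P Q)) = Santi P * mulmap (tmap Santi id (Poly_Mapping.single w 1)) * Q"
    by (simp add: w s tens_mult tmap_tens[OF lin_Santi lin_id(1)] mulmap_tens Santi_mult mult.assoc)
qed

lemma mid_sc: "A * sc c 1 * B = sc c (A * (B :: 'a::monoid_add \<Rightarrow>\<^sub>0 'k::comm_ring_1))"
  by (simp add: sc_mult_right[symmetric] sc_mult_left[symmetric])

lemma lin_sc_heps: "lin (\<lambda>p. sc (heps K p) (1 :: gen word \<Rightarrow>\<^sub>0 'k::field))"
  by (simp add: lin_def heps_add heps_sc sc_add_left sc_sc)

lemma sum_out_ideal: "(\<And>k. k \<in> A \<Longrightarrow> f k \<in> ideal_of R) \<Longrightarrow> eqv R (sum f A) 0"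
  by (simp add: eqv_def ideal_sum)

lemma hg4a: "eqv (hrels m n) (mulmap (tmap id Santi (ext (gcop n) p))) (sc (heps m p) (1 :: gen word \<Rightarrow>\<^sub>0 'k::field))"
proof -
  let ?Phi = "\<lambda>p :: gen word \<Rightarrow>\<^sub>0 'k. mulmap (tmap id Santi (ext (gcop n) p))"
  have PhiX: "?Phi (X i j a) = (\<Sum>k\<in>{1..n}. X i k a * X j k (Suc a))" for i j a
    by (simp add: D_X lin_sum[OF lin_mulmap] lin_sum[OF lin_tmap] tmap_tens[OF lin_id(1) lin_Santi] mulmap_tens Santi_X)
  have base: "eqv (hrels m n) (?Phi (X i j a)) (sc (heps m (X i j a)) 1)" for i j a
  proof (cases "i \<in> {1..m} \<and> j \<in> {1..m}")
    case True
    then show ?thesis unfolding PhiX heps_X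
      using eqv_gen[OF rel1_mem[where i=i and i'=j and p=m and q=n and a=a]] by (auto simp: sc_one_conv)
  next
    case False
    then have "heps m (X i j a) = (0::'k)" by (auto simp: heps_X)
    moreover have "eqv (hrels m n) (?Phi (X i j a)) 0"
      unfolding PhiX
    proof (rule sum_out_ideal)
      fix k assume "k \<in> {1..n}"
      show "X i k a * X j k (Suc a) \<in> ideal_of (hrels m n)"
      proof (cases "i \<in> {1..m}")
        case True then have "j \<notin> {1..m}" using False by blast
        then show ?thesis by (intro ideal_left X_out) blast
      next
        case False then show ?thesis by (intro ideal_right X_out) blast
      qed
    qed
    ultimately show ?thesis by simp
  qed
  have words: "eqv (hrels m n) (?Phi (Poly_Mapping.single (Word xs) 1)) (sc (heps m (Poly_Mapping.single (Word xs) 1)) 1)" for xs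
  proof (induction xs)
    case Nil
    have phi1: "?Phi 1 = 1"
      by (simp add: hom_one[OF hom_D] tmap_tens[OF lin_id(1) lin_Santi] mulmap_tens Santi_one flip: tens_one)
    have h1: "Poly_Mapping.single (Word []) (1::'k) = 1" by (simp flip: Word_zero)
    show ?case by (simp only: h1 phi1 heps_one sc_one eqv_refl)
  next
    case (Cons x xs)
    obtain i j a where x: "x = (i, j, a)" by (cases x) auto
    let ?w = "Poly_Mapping.single (Word xs) (1::'k)"
    have e: "Poly_Mapping.single (Word (x # xs)) (1::'k) = X i j a * ?w"
      by (simp add: x X_def mult_single)
    have "?Phi (X i j a * ?w) = (\<Sum>k\<in>{1..n}. X i k a * ?Phi ?w * Santi (X k j a))"
      by (simp add: hom_mult[OF hom_D] D_X sum_distrib_right lin_sum[OF lin_mulmap] lin_sum[OF lin_tmap] step_left)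
    also have "eqv (hrels m n) \<dots> (\<Sum>k\<in>{1..n}. X i k a * sc (heps m ?w) 1 * Santi (X k j a))"
      by (intro eqv_sum eqv_mult eqv_refl Cons)
    also have "\<dots> = sc (heps m ?w) (?Phi (X i j a))"
      by (simp add: mid_sc PhiX sc_sum Santi_X)
    also have "eqv (hrels m n) \<dots> (sc (heps m ?w) (sc (heps m (X i j a)) 1))"
      by (intro eqv_sc base)
    also have "\<dots> = sc (heps m (X i j a * ?w)) 1"
      by (simp add: sc_sc heps_mult mult.commute)
    finally show ?case by (simp only: e)
  qed
  show ?thesis
  proof (rule lin_eqv[OF _ lin_sc_heps])
    show "lin ?Phi" by (rule lin_comp[OF lin_mulmap lin_comp[OF lin_tmap lin_D]])
    fix w :: "gen word"
    obtain xs where "w = Word xs" by (cases w)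
    then show "eqv (hrels m n) (?Phi (Poly_Mapping.single w 1)) (sc (heps m (Poly_Mapping.single w 1)) 1)"
      using words by simp
  qed
qed

lemma hg4b: "eqv (hrels m n) (mulmap (tmap Santi id (ext (gcop m) p))) (sc (heps n p) (1 :: gen word \<Rightarrow>\<^sub>0 'k::field))"
proof -
  let ?Psi = "\<lambda>p :: gen word \<Rightarrow>\<^sub>0 'k. mulmap (tmap Santi id (ext (gcop m) p))"
  have PsiX: "?Psi (X i j a) = (\<Sum>k\<in>{1..m}. X k i (Suc a) * X k j a)" for i j a
    by (simp add: D_X lin_sum[OF lin_mulmap] lin_sum[OF lin_tmap] tmap_tens[OF lin_Santi lin_id(1)] mulmap_tens Santi_X)
  have base: "eqv (hrels m n) (?Psi (X i j a)) (sc (heps n (X i j a)) 1)" for i j a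
  proof (cases "i \<in> {1..n} \<and> j \<in> {1..n}")
    case True
    then show ?thesis unfolding PsiX heps_X
      using eqv_gen[OF rel2_mem[where j=i and j'=j and q=n and p=m and a=a]] by (auto simp: sc_one_conv)
  next
    case False
    then have "heps n (X i j a) = (0::'k)" by (auto simp: heps_X)
    moreover have "eqv (hrels m n) (?Psi (X i j a)) 0"
      unfolding PsiX
    proof (rule sum_out_ideal)
      fix k assume "k \<in> {1..m}"
      show "X k i (Suc a) * X k j a \<in> ideal_of (hrels m n)"
      proof (cases "i \<in> {1..n}")
        case True then have "j \<notin> {1..n}" using False by blast
        then show ?thesis by (intro ideal_left X_out) blast
      next
        case False then show ?thesis by (intro ideal_right X_out) blast
      qed
    qed
    ultimately show ?thesis by simp
  qed
  have words: "eqv (hrels m n) (?Psi (Poly_Mapping.single (Word xs) 1)) (sc (heps n (Poly_Mapping.single (Word xs) 1)) 1)" for xs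
  proof (induction xs rule: rev_induct)
    case Nil
    have phi1: "?Psi 1 = 1"
      by (simp add: hom_one[OF hom_D] tmap_tens[OF lin_Santi lin_id(1)] mulmap_tens Santi_one flip: tens_one)
    have h1: "Poly_Mapping.single (Word []) (1::'k) = 1" by (simp flip: Word_zero)
    show ?case by (simp only: h1 phi1 heps_one sc_one eqv_refl)
  next
    case (snoc x xs)
    obtain i j a where x: "x = (i, j, a)" by (cases x) auto
    let ?w = "Poly_Mapping.single (Word xs) (1::'k)"
    have e: "Poly_Mapping.single (Word (xs @ [x])) (1::'k) = ?w * X i j a"
      by (simp add: x X_def mult_single)
    have "?Psi (?w * X i j a) = (\<Sum>k\<in>{1..m}. Santi (X i k a) * ?Psi ?w * X k j a)"
      by (simp add: hom_mult[OF hom_D] D_X sum_distrib_left lin_sum[OF lin_mulmap] lin_sum[OF lin_tmap] step_right)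
    also have "eqv (hrels m n) \<dots> (\<Sum>k\<in>{1..m}. Santi (X i k a) * sc (heps n ?w) 1 * X k j a)"
      by (intro eqv_sum eqv_mult eqv_refl snoc)
    also have "\<dots> = sc (heps n ?w) (?Psi (X i j a))"
      by (simp add: mid_sc PsiX sc_sum Santi_X)
    also have "eqv (hrels m n) \<dots> (sc (heps n ?w) (sc (heps n (X i j a)) 1))"
      by (intro eqv_sc base)
    also have "\<dots> = sc (heps n (?w * X i j a)) 1"
      by (simp add: sc_sc heps_mult)
    finally show ?case by (simp only: e)
  qed
  show ?thesis
  proof (rule lin_eqv[OF _ lin_sc_heps])
    show "lin ?Psi" by (rule lin_comp[OF lin_mulmap lin_comp[OF lin_tmap lin_D]])
    fix w :: "gen word"
    obtain xs where "w = Word xs" by (cases w)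
    then show "eqv (hrels m n) (?Psi (Poly_Mapping.single w 1)) (sc (heps n (Poly_Mapping.single w 1)) 1)"
      using words by simp
  qed
qed



section \<open>A faithful representation: non-vanishing of H(p,q)\<close>

declare linext_cong [fundef_cong]

definition cc :: "nat \<Rightarrow> nat" where "cc a = (if even a then 1 else 2)"

definition inr :: "nat \<Rightarrow> nat \<Rightarrow> gen \<Rightarrow> bool" where
  "inr p q x = (case x of (i, j, a) \<Rightarrow> i \<in> {1..p} \<and> j \<in> {1..q})"

definition lead1 :: "gen \<Rightarrow> gen \<Rightarrow> bool" where
  "lead1 g c = (case g of (i, j, a) \<Rightarrow> case c of (i', j', a') \<Rightarrow> a' = Suc a \<and> j = cc a \<and> j' = cc a)"

definition lead2 :: "gen \<Rightarrow> gen \<Rightarrow> bool" where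
  "lead2 g c = (case g of (i, j, a) \<Rightarrow> case c of (i', j', a') \<Rightarrow> a = Suc a' \<and> i = cc a' \<and> i' = cc a')"

fun irr :: "nat \<Rightarrow> nat \<Rightarrow> gen list \<Rightarrow> bool" where
  "irr p q [] = True"
| "irr p q [x] = inr p q x"
| "irr p q (x # y # w) = (inr p q x \<and> \<not> lead1 x y \<and> \<not> lead2 x y \<and> irr p q (y # w))"

type_synonym 'k vec = "gen list \<Rightarrow>\<^sub>0 'k"

function M :: "nat \<Rightarrow> nat \<Rightarrow> gen \<Rightarrow> gen list \<Rightarrow> 'k::field vec" where
  "M p q (i, j, a) [] = Poly_Mapping.single [(i, j, a)] 1"
| "M p q (i, j, a) ((i', j', a') # u) =
    (if a' = Suc a \<and> j = cc a \<and> j' = cc a then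
       (if i = i' then Poly_Mapping.single u 1 else 0)
       - (\<Sum>l\<in>{1..q} - {cc a}. linext (\<lambda>v. if length v \<le> length u then M p q (i, l, a) v
                                          else Poly_Mapping.single ((i, l, a) # v) 1) (M p q (i', l, a') u))
     else if a = Suc a' \<and> i = cc a' \<and> i' = cc a' then
       (if j = j' then Poly_Mapping.single u 1 else 0)
       - (\<Sum>l\<in>{1..p} - {cc a'}. linext (\<lambda>v. if length v \<le> length u then M p q (l, j, a) v
                                          else Poly_Mapping.single ((l, j, a) # v) 1) (M p q (l, j', a') u))
     else Poly_Mapping.single ((i, j, a) # (i', j', a') # u) 1)"
  by pat_completeness auto
termination
  by (relation "measure (\<lambda>(p, q, g, w). length w)") auto

lemma M_nil: "M p q g [] = Poly_Mapping.single [g] 1"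
  by (cases g) simp

lemma M_nonlead: "\<not> lead1 (i, j, a) (i', j', a') \<Longrightarrow> \<not> lead2 (i, j, a) (i', j', a') \<Longrightarrow>
   M p q (i, j, a) ((i', j', a') # u) = Poly_Mapping.single ((i, j, a) # (i', j', a') # u) 1"
proof -
  assume "\<not> lead1 (i, j, a) (i', j', a')" "\<not> lead2 (i, j, a) (i', j', a')"
  then have n: "\<not> (a' = Suc a \<and> j = cc a \<and> j' = cc a)" "\<not> (a = Suc a' \<and> i = cc a' \<and> i' = cc a')"
    by (simp_all add: lead1_def lead2_def)
  show ?thesis by (simp only: M.simps(2) n if_False)
qed

lemma M_nonlead':
  assumes "\<not> lead1 g c" "\<not> lead2 g c"
  shows "M p q g (c # u) = Poly_Mapping.single (g # c # u) 1"
proof -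
  obtain i j a where g: "g = (i, j, a)" by (cases g) auto
  obtain i' j' a' where c: "c = (i', j', a')" by (cases c) auto
  show ?thesis using assms unfolding g c by (rule M_nonlead)
qed

lemma M_lead1: "M p q (i, cc a, a) ((i', cc a, Suc a) # u) =
       (if i = i' then Poly_Mapping.single u 1 else 0)
       - (\<Sum>l\<in>{1..q} - {cc a}. linext (\<lambda>v. if length v \<le> length u then M p q (i, l, a) v
                                          else Poly_Mapping.single ((i, l, a) # v) 1) (M p q (i', l, Suc a) u))"
  by simp

lemma M_lead2: "M p q (cc a, j, Suc a) ((cc a, j', a) # u) =
       (if j = j' then Poly_Mapping.single u 1 else 0)
       - (\<Sum>l\<in>{1..p} - {cc a}. linext (\<lambda>v. if length v \<le> length u then M p q (l, j, Suc a) v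
                                          else Poly_Mapping.single ((l, j, Suc a) # v) 1) (M p q (l, j', a) u))"
  by simp

definition long_ok :: "gen \<Rightarrow> gen list \<Rightarrow> gen \<Rightarrow> bool" where
  "long_ok g w d \<longleftrightarrow> d = g
     \<or> (w \<noteq> [] \<and> lead1 g (hd w) \<and> fst d = fst g \<and> snd (snd d) = snd (snd g))
     \<or> (w \<noteq> [] \<and> lead2 g (hd w) \<and> fst (snd d) = fst (snd g) \<and> snd (snd d) = snd (snd g))"

lemma keys_linext_elem: "v \<in> Poly_Mapping.keys (linext F P) \<Longrightarrow> \<exists>x\<in>Poly_Mapping.keys P. v \<in> Poly_Mapping.keys (F x)"
  using keys_linext[of F P] by blast

lemma keys_if01: "v \<in> Poly_Mapping.keys (if c then Poly_Mapping.single u (1::'k::field) else 0) \<Longrightarrow> v = u"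
  by (cases c) auto

lemma M_shape:
  "v \<in> Poly_Mapping.keys (M p q g w :: 'k::field vec) \<Longrightarrow>
     length v \<le> Suc (length w) \<and> (length v = Suc (length w) \<longrightarrow> v \<noteq> [] \<and> long_ok g w (hd v))"
proof (induction w arbitrary: g v rule: length_induct)
  case (1 w)
  have ih: "\<And>ys g' v'. length ys < length w \<Longrightarrow> v' \<in> Poly_Mapping.keys (M p q g' ys :: 'k vec) \<Longrightarrow>
     length v' \<le> Suc (length ys) \<and> (length v' = Suc (length ys) \<longrightarrow> v' \<noteq> [] \<and> long_ok g' ys (hd v'))"
    using "1.IH" by blast
  obtain i j a where g: "g = (i, j, a)" by (cases g) auto
  show ?case
  proof (cases w)
    case Nil
    then show ?thesis using "1.prems" by (simp add: M_nil long_ok_def)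
  next
    case (Cons c u)
    obtain i' j' a' where c: "c = (i', j', a')" by (cases c) auto
    show ?thesis
    proof (cases "lead1 g c")
      case True
      then have e: "a' = Suc a" "j = cc a" "j' = cc a" by (simp_all add: g c lead1_def)
      let ?F = "\<lambda>l. linext (\<lambda>v. if length v \<le> length u then M p q (i, l, a) v
                                          else Poly_Mapping.single ((i, l, a) # v) 1) (M p q (i', l, Suc a) u) :: 'k vec"
      let ?A = "if i = i' then Poly_Mapping.single u (1::'k) else 0"
      have vk: "v \<in> Poly_Mapping.keys (?A - (\<Sum>l\<in>{1..q} - {cc a}. ?F l))"
        using "1.prems" unfolding g Cons c e M_lead1 .
      have "v \<in> Poly_Mapping.keys ?A \<or> v \<in> Poly_Mapping.keys (\<Sum>l\<in>{1..q} - {cc a}. ?F l)"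
        using subsetD[OF keys_diff vk] by blast
      then have "v \<in> Poly_Mapping.keys ?A \<or> (\<exists>l\<in>{1..q} - {cc a}. v \<in> Poly_Mapping.keys (?F l))"
        using keys_sum[of ?F "{1..q} - {cc a}"] by blast
      then show ?thesis
      proof
        assume "v \<in> Poly_Mapping.keys (if i = i' then Poly_Mapping.single u (1::'k) else 0)"
        then show ?thesis using Cons by (auto dest: keys_if01)
      next
        assume "\<exists>l\<in>{1..q} - {cc a}. v \<in> Poly_Mapping.keys (linext (\<lambda>v. if length v \<le> length u then M p q (i, l, a) v
                                          else Poly_Mapping.single ((i, l, a) # v) 1) (M p q (i', l, Suc a) u) :: 'k vec)"
        then obtain l x where l: "l \<in> {1..q} - {cc a}" and x: "x \<in> Poly_Mapping.keys (M p q (i', l, Suc a) u :: 'k vec)"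
          and v: "v \<in> Poly_Mapping.keys ((if length x \<le> length u then M p q (i, l, a) x
                                          else Poly_Mapping.single ((i, l, a) # x) 1) :: 'k vec)"
          by (blast dest: keys_linext_elem)
        have lx: "length x \<le> Suc (length u)" using ih[where ys=u and g'="(i', l, Suc a)" and v'=x] x Cons by simp
        show ?thesis
        proof (cases "length x \<le> length u")
          case True
          then have "length v \<le> Suc (length x)" using ih[where ys=x and g'="(i, l, a)" and v'=v] v Cons by simp
          then show ?thesis using True Cons by simp
        next
          case False
          then have "v = (i, l, a) # x" using v by simp
          moreover have "length x = Suc (length u)" using False lx by simp
          ultimately show ?thesis using Cons True by (simp add: long_ok_def g c)
        qed
      qed
    next
      case nl1: False
      show ?thesis
      proof (cases "lead2 g c")
        case True
        then have e: "a = Suc a'" "i = cc a'" "i' = cc a'" by (simp_all add: g c lead2_def)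
        let ?F = "\<lambda>l. linext (\<lambda>v. if length v \<le> length u then M p q (l, j, Suc a') v
                                            else Poly_Mapping.single ((l, j, Suc a') # v) 1) (M p q (l, j', a') u) :: 'k vec"
        let ?A = "if j = j' then Poly_Mapping.single u (1::'k) else 0"
        have vk: "v \<in> Poly_Mapping.keys (?A - (\<Sum>l\<in>{1..p} - {cc a'}. ?F l))"
          using "1.prems" unfolding g Cons c e M_lead2 .
        have "v \<in> Poly_Mapping.keys ?A \<or> v \<in> Poly_Mapping.keys (\<Sum>l\<in>{1..p} - {cc a'}. ?F l)"
          using subsetD[OF keys_diff vk] by blast
        then have "v \<in> Poly_Mapping.keys ?A \<or> (\<exists>l\<in>{1..p} - {cc a'}. v \<in> Poly_Mapping.keys (?F l))"
          using keys_sum[of ?F "{1..p} - {cc a'}"] by blast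
        then show ?thesis
        proof
          assume "v \<in> Poly_Mapping.keys (if j = j' then Poly_Mapping.single u (1::'k) else 0)"
          then show ?thesis using Cons by (auto dest: keys_if01)
        next
          assume "\<exists>l\<in>{1..p} - {cc a'}. v \<in> Poly_Mapping.keys (linext (\<lambda>v. if length v \<le> length u then M p q (l, j, Suc a') v
                                            else Poly_Mapping.single ((l, j, Suc a') # v) 1) (M p q (l, j', a') u) :: 'k vec)"
          then obtain l x where l: "l \<in> {1..p} - {cc a'}" and x: "x \<in> Poly_Mapping.keys (M p q (l, j', a') u :: 'k vec)"
            and v: "v \<in> Poly_Mapping.keys ((if length x \<le> length u then M p q (l, j, Suc a') x
                                            else Poly_Mapping.single ((l, j, Suc a') # x) 1) :: 'k vec)"
            by (blast dest: keys_linext_elem)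
          have lx: "length x \<le> Suc (length u)" using ih[where ys=u and g'="(l, j', a')" and v'=x] x Cons by simp
          show ?thesis
          proof (cases "length x \<le> length u")
            case True
            then have "length v \<le> Suc (length x)" using ih[where ys=x and g'="(l, j, Suc a')" and v'=v] v Cons by simp
            then show ?thesis using True Cons by simp
          next
            case False
            then have "v = (l, j, Suc a') # x" using v by simp
            moreover have "length x = Suc (length u)" using False lx by simp
            ultimately show ?thesis using Cons True e by (simp add: long_ok_def g c)
          qed
        qed
      next
        case False
        then have "M p q g w = Poly_Mapping.single (g # c # u) (1::'k)"
          using nl1 by (simp add: Cons M_nonlead')
        then show ?thesis using "1.prems" Cons by (simp add: long_ok_def)
      qed
    qed
  qed
qed

lemma irr_cons: "irr p q (c # u) \<longleftrightarrow> inr p q c \<and> irr p q u \<and> (u \<noteq> [] \<longrightarrow> \<not> lead1 c (hd u) \<and> \<not> lead2 c (hd u))"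
  by (cases u) auto

lemma tail1:
  assumes "l \<noteq> cc a" "u \<noteq> [] \<Longrightarrow> \<not> lead2 (i', cc a, Suc a) (hd u)" "long_ok (i', l, Suc a) u d"
  shows "\<not> lead1 (i, l, a) d \<and> \<not> lead2 (i, l, a) d"
proof -
  obtain x y b where d: "d = (x, y, b)" by (cases d) auto
  show ?thesis
  proof (cases "u = []")
    case True then show ?thesis using assms by (auto simp: long_ok_def lead1_def lead2_def d)
  next
    case False
    obtain x' y' b' where h: "hd u = (x', y', b')" by (cases "hd u") auto
    show ?thesis using assms False by (auto simp: long_ok_def lead1_def lead2_def d h)
  qed
qed

lemma tail2:
  assumes "l \<noteq> cc a" "u \<noteq> [] \<Longrightarrow> \<not> lead1 (cc a, j', a) (hd u)" "long_ok (l, j', a) u d"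
  shows "\<not> lead1 (l, j, Suc a) d \<and> \<not> lead2 (l, j, Suc a) d"
proof -
  obtain x y b where d: "d = (x, y, b)" by (cases d) auto
  show ?thesis
  proof (cases "u = []")
    case True then show ?thesis using assms by (auto simp: long_ok_def lead1_def lead2_def d)
  next
    case False
    obtain x' y' b' where h: "hd u = (x', y', b')" by (cases "hd u") auto
    show ?thesis using assms False by (auto simp: long_ok_def lead1_def lead2_def d h)
  qed
qed

lemma long_key:
  assumes "v \<in> Poly_Mapping.keys (M p q g u :: 'k::field vec)" "\<not> length v \<le> length u"
  shows "length v = Suc (length u) \<and> v \<noteq> [] \<and> long_ok g u (hd v)"
  using M_shape[OF assms(1)] assms(2) by auto

lemma M_lead1_L:
  assumes "irr p q ((i', cc a, Suc a) # u)"
  shows "M p q (i, cc a, a) ((i', cc a, Suc a) # u) =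
       (if i = i' then Poly_Mapping.single u 1 else 0)
       - (\<Sum>l\<in>{1..q} - {cc a}. linext (M p q (i, l, a)) (M p q (i', l, Suc a) u) :: 'k::field vec)"
proof -
  have "linext (\<lambda>v. if length v \<le> length u then M p q (i, l, a) v
           else Poly_Mapping.single ((i, l, a) # v) 1) (M p q (i', l, Suc a) u)
      = linext (M p q (i, l, a)) (M p q (i', l, Suc a) u :: 'k vec)" if l: "l \<in> {1..q} - {cc a}" for l
  proof (rule linext_cong[OF refl])
    fix v assume v: "v \<in> Poly_Mapping.keys (M p q (i', l, Suc a) u :: 'k vec)"
    show "(if length v \<le> length u then M p q (i, l, a) v else Poly_Mapping.single ((i, l, a) # v) 1) = M p q (i, l, a) v"
    proof (cases "length v \<le> length u")
      case False
      then have lk: "v \<noteq> [] \<and> long_ok (i', l, Suc a) u (hd v)" using long_key[OF v] by blast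
      have "u \<noteq> [] \<Longrightarrow> \<not> lead2 (i', cc a, Suc a) (hd u)" using assms by (simp add: irr_cons)
      then have nl: "\<not> lead1 (i, l, a) (hd v) \<and> \<not> lead2 (i, l, a) (hd v)"
        using tail1[of l a u i' "hd v" i] l lk by blast
      obtain d v' where "v = d # v'" using lk by (cases v) auto
      then show ?thesis using False nl by (simp add: M_nonlead')
    qed simp
  qed
  then show ?thesis by (simp only: M_lead1 cong: sum.cong)
qed

lemma M_lead2_L:
  assumes "irr p q ((cc a, j', a) # u)"
  shows "M p q (cc a, j, Suc a) ((cc a, j', a) # u) =
       (if j = j' then Poly_Mapping.single u 1 else 0)
       - (\<Sum>l\<in>{1..p} - {cc a}. linext (M p q (l, j, Suc a)) (M p q (l, j', a) u) :: 'k::field vec)"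
proof -
  have "linext (\<lambda>v. if length v \<le> length u then M p q (l, j, Suc a) v
           else Poly_Mapping.single ((l, j, Suc a) # v) 1) (M p q (l, j', a) u)
      = linext (M p q (l, j, Suc a)) (M p q (l, j', a) u :: 'k vec)" if l: "l \<in> {1..p} - {cc a}" for l
  proof (rule linext_cong[OF refl])
    fix v assume v: "v \<in> Poly_Mapping.keys (M p q (l, j', a) u :: 'k vec)"
    show "(if length v \<le> length u then M p q (l, j, Suc a) v else Poly_Mapping.single ((l, j, Suc a) # v) 1) = M p q (l, j, Suc a) v"
    proof (cases "length v \<le> length u")
      case False
      then have lk: "v \<noteq> [] \<and> long_ok (l, j', a) u (hd v)" using long_key[OF v] by blast
      have "u \<noteq> [] \<Longrightarrow> \<not> lead1 (cc a, j', a) (hd u)" using assms by (simp add: irr_cons)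
      then have nl: "\<not> lead1 (l, j, Suc a) (hd v) \<and> \<not> lead2 (l, j, Suc a) (hd v)"
        using tail2[of l a u j' "hd v" j] l lk by blast
      obtain d v' where "v = d # v'" using lk by (cases v) auto
      then show ?thesis using False nl by (simp add: M_nonlead')
    qed simp
  qed
  then show ?thesis by (simp only: M_lead2 cong: sum.cong)
qed

lemma cc_range: "2 \<le> q \<Longrightarrow> cc a \<in> {1..q}"
  by (auto simp: cc_def)

lemma M_irr:
  "irr p q w \<Longrightarrow> inr p q g \<Longrightarrow> v \<in> Poly_Mapping.keys (M p q g w :: 'k::field vec) \<Longrightarrow> irr p q v"
proof (induction w arbitrary: g v rule: length_induct)
  case (1 w)
  have ih: "\<And>ys g' v'. length ys < length w \<Longrightarrow> irr p q ys \<Longrightarrow> inr p q g' \<Longrightarrow> v' \<in> Poly_Mapping.keys (M p q g' ys :: 'k vec) \<Longrightarrow> irr p q v'"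
    using "1.IH" by blast
  obtain i j a where g: "g = (i, j, a)" by (cases g) auto
  show ?case
  proof (cases w)
    case Nil
    then show ?thesis using "1.prems" by (simp add: M_nil)
  next
    case (Cons c u)
    obtain i' j' a' where c: "c = (i', j', a')" by (cases c) auto
    have wc: "irr p q (c # u)" using "1.prems" Cons by simp
    show ?thesis
    proof (cases "lead1 g c")
      case True
      then have e: "a' = Suc a" "j = cc a" "j' = cc a" by (simp_all add: g c lead1_def)
      let ?F = "\<lambda>l. linext (M p q (i, l, a)) (M p q (i', l, Suc a) u) :: 'k vec"
      let ?A = "if i = i' then Poly_Mapping.single u (1::'k) else 0"
      have vk: "v \<in> Poly_Mapping.keys (?A - (\<Sum>l\<in>{1..q} - {cc a}. ?F l))"
      proof -
        have wc': "irr p q ((i', cc a, Suc a) # u)" using wc unfolding c e .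
        show ?thesis using "1.prems"(3) unfolding g Cons c e M_lead1_L[OF wc'] .
      qed
      have "v \<in> Poly_Mapping.keys ?A \<or> v \<in> Poly_Mapping.keys (\<Sum>l\<in>{1..q} - {cc a}. ?F l)"
        using subsetD[OF keys_diff vk] by blast
      then have "v \<in> Poly_Mapping.keys ?A \<or> (\<exists>l\<in>{1..q} - {cc a}. v \<in> Poly_Mapping.keys (?F l))"
        using keys_sum[of ?F "{1..q} - {cc a}"] by blast
      then show ?thesis
      proof
        assume "v \<in> Poly_Mapping.keys ?A"
        then show ?thesis using wc by (auto dest: keys_if01 simp: irr_cons)
      next
        assume "\<exists>l\<in>{1..q} - {cc a}. v \<in> Poly_Mapping.keys (?F l)"
        then obtain l x where l: "l \<in> {1..q} - {cc a}" and x: "x \<in> Poly_Mapping.keys (M p q (i', l, Suc a) u :: 'k vec)"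
          and v: "v \<in> Poly_Mapping.keys (M p q (i, l, a) x :: 'k vec)"
          by (blast dest: keys_linext_elem)
        have inr1: "inr p q (i', l, Suc a)" using wc l by (simp add: irr_cons inr_def c)
        have inr2: "inr p q (i, l, a)" using "1.prems"(2) l by (simp add: inr_def g)
        have irrx: "irr p q x" using ih[where ys=u and g'="(i', l, Suc a)" and v'=x] x Cons wc inr1 by (simp add: irr_cons)
        show ?thesis
        proof (cases "length x \<le> length u")
          case True
          then show ?thesis using ih[where ys=x and g'="(i, l, a)" and v'=v] v Cons irrx inr2 by simp
        next
          case False
          then have lk: "long_ok (i', l, Suc a) u (hd x) \<and> x \<noteq> []" using long_key[OF x] by auto
          have "u \<noteq> [] \<Longrightarrow> \<not> lead2 (i', cc a, Suc a) (hd u)" using wc by (simp add: irr_cons c e)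
          then have nl: "\<not> lead1 (i, l, a) (hd x) \<and> \<not> lead2 (i, l, a) (hd x)"
            using tail1[of l a u i' "hd x" i] l lk by blast
          obtain d x' where xd: "x = d # x'" using lk by (cases x) auto
          then have "v = (i, l, a) # x" using v nl by (simp add: M_nonlead')
          then show ?thesis using irrx inr2 nl xd by (simp add: irr_cons)
        qed
      qed
    next
      case nl1: False
      show ?thesis
      proof (cases "lead2 g c")
        case True
        then have e: "a = Suc a'" "i = cc a'" "i' = cc a'" by (simp_all add: g c lead2_def)
        let ?F = "\<lambda>l. linext (M p q (l, j, Suc a')) (M p q (l, j', a') u) :: 'k vec"
        let ?A = "if j = j' then Poly_Mapping.single u (1::'k) else 0"
        have vk: "v \<in> Poly_Mapping.keys (?A - (\<Sum>l\<in>{1..p} - {cc a'}. ?F l))"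
        proof -
          have wc': "irr p q ((cc a', j', a') # u)" using wc unfolding c e .
          show ?thesis using "1.prems"(3) unfolding g Cons c e M_lead2_L[OF wc'] .
        qed
        have "v \<in> Poly_Mapping.keys ?A \<or> v \<in> Poly_Mapping.keys (\<Sum>l\<in>{1..p} - {cc a'}. ?F l)"
          using subsetD[OF keys_diff vk] by blast
        then have "v \<in> Poly_Mapping.keys ?A \<or> (\<exists>l\<in>{1..p} - {cc a'}. v \<in> Poly_Mapping.keys (?F l))"
          using keys_sum[of ?F "{1..p} - {cc a'}"] by blast
        then show ?thesis
        proof
          assume "v \<in> Poly_Mapping.keys ?A"
          then show ?thesis using wc by (auto dest: keys_if01 simp: irr_cons)
        next
          assume "\<exists>l\<in>{1..p} - {cc a'}. v \<in> Poly_Mapping.keys (?F l)"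
          then obtain l x where l: "l \<in> {1..p} - {cc a'}" and x: "x \<in> Poly_Mapping.keys (M p q (l, j', a') u :: 'k vec)"
            and v: "v \<in> Poly_Mapping.keys (M p q (l, j, Suc a') x :: 'k vec)"
            by (blast dest: keys_linext_elem)
          have inr1: "inr p q (l, j', a')" using wc l by (simp add: irr_cons inr_def c)
          have inr2: "inr p q (l, j, Suc a')" using "1.prems"(2) l e by (simp add: inr_def g)
          have irrx: "irr p q x" using ih[where ys=u and g'="(l, j', a')" and v'=x] x Cons wc inr1 by (simp add: irr_cons)
          show ?thesis
          proof (cases "length x \<le> length u")
            case True
            then show ?thesis using ih[where ys=x and g'="(l, j, Suc a')" and v'=v] v Cons irrx inr2 by simp
          next
            case False
            then have lk: "long_ok (l, j', a') u (hd x) \<and> x \<noteq> []" using long_key[OF x] by auto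
            have "u \<noteq> [] \<Longrightarrow> \<not> lead1 (cc a', j', a') (hd u)" using wc by (simp add: irr_cons c e)
            then have nl: "\<not> lead1 (l, j, Suc a') (hd x) \<and> \<not> lead2 (l, j, Suc a') (hd x)"
              using tail2[of l a' u j' "hd x" j] l lk by blast
            obtain d x' where xd: "x = d # x'" using lk by (cases x) auto
            then have "v = (l, j, Suc a') # x" using v nl by (simp add: M_nonlead')
            then show ?thesis using irrx inr2 nl xd by (simp add: irr_cons)
          qed
        qed
      next
        case False
        then have "v = g # c # u" using nl1 "1.prems"(3) Cons by (simp add: M_nonlead')
        then show ?thesis using nl1 False wc "1.prems"(2) by (simp add: irr_cons)
      qed
    qed
  qed
qed

definition L :: "nat \<Rightarrow> nat \<Rightarrow> gen \<Rightarrow> 'k::field vec \<Rightarrow> 'k vec" where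
  "L p q g x = (if inr p q g then linext (M p q g) x else 0)"

lemma lin_L: "lin (L p q g)"
  by (cases "inr p q g") (simp_all add: L_def lin_def linext_add linext_sc)

lemma L_single: "inr p q g \<Longrightarrow> L p q g (Poly_Mapping.single w 1) = M p q g w"
  by (simp add: L_def linext_single)

lemma L_out: "\<not> inr p q g \<Longrightarrow> L p q g x = 0"
  by (simp add: L_def)

lemma L_zero: "L p q g 0 = 0"
  by (rule lin_zero[OF lin_L])

lemma L_irr: "(\<And>w. w \<in> Poly_Mapping.keys x \<Longrightarrow> irr p q w) \<Longrightarrow> v \<in> Poly_Mapping.keys (L p q g x) \<Longrightarrow> irr p q v"
  by (cases "inr p q g") (auto simp: L_def dest!: keys_linext_elem intro: M_irr)

lemma L_nil: "inr p q g \<Longrightarrow> L p q g (Poly_Mapping.single [] 1) = Poly_Mapping.single [g] 1"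
  by (simp add: L_single M_nil)

lemma L_nonlead: "inr p q g \<Longrightarrow> \<not> lead1 g c \<Longrightarrow> \<not> lead2 g c \<Longrightarrow>
    L p q g (Poly_Mapping.single (c # u) 1) = Poly_Mapping.single (g # c # u) 1"
  by (simp add: L_single M_nonlead')

lemma L_push: "inr p q g \<Longrightarrow> irr p q w \<Longrightarrow> (w = [] \<or> \<not> lead1 g (hd w) \<and> \<not> lead2 g (hd w)) \<Longrightarrow>
    L p q g (Poly_Mapping.single w 1) = Poly_Mapping.single (g # w) 1"
  by (cases w) (auto simp: L_nil L_nonlead)

lemma L_lead1:
  assumes "inr p q (i, cc a, a)" "irr p q ((i', cc a, Suc a) # u)"
  shows "L p q (i, cc a, a) (Poly_Mapping.single ((i', cc a, Suc a) # u) 1) =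
       (if i = i' then Poly_Mapping.single u 1 else 0)
       - (\<Sum>l\<in>{1..q} - {cc a}. L p q (i, l, a) (L p q (i', l, Suc a) (Poly_Mapping.single u 1)) :: 'k::field vec)"
proof -
  have i: "i \<in> {1..p}" using assms(1) by (simp add: inr_def)
  have i': "i' \<in> {1..p}" using assms(2) by (simp add: irr_cons inr_def)
  have f: "L p q (i, l, a) (L p q (i', l, Suc a) (Poly_Mapping.single u 1)) = linext (M p q (i, l, a)) (M p q (i', l, Suc a) u :: 'k vec)"
    if "l \<in> {1..q} - {cc a}" for l
    using that i i' by (simp add: L_def linext_single inr_def)
  have "(\<Sum>l\<in>{1..q} - {cc a}. L p q (i, l, a) (L p q (i', l, Suc a) (Poly_Mapping.single u 1)))
      = (\<Sum>l\<in>{1..q} - {cc a}. linext (M p q (i, l, a)) (M p q (i', l, Suc a) u :: 'k vec))"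
    by (rule sum.cong[OF refl]) (rule f)
  then show ?thesis unfolding L_single[OF assms(1)] M_lead1_L[OF assms(2)] by (simp only:)
qed

lemma L_lead2:
  assumes "inr p q (cc a, j, Suc a)" "irr p q ((cc a, j', a) # u)"
  shows "L p q (cc a, j, Suc a) (Poly_Mapping.single ((cc a, j', a) # u) 1) =
       (if j = j' then Poly_Mapping.single u 1 else 0)
       - (\<Sum>l\<in>{1..p} - {cc a}. L p q (l, j, Suc a) (L p q (l, j', a) (Poly_Mapping.single u 1)) :: 'k::field vec)"
proof -
  have j: "j \<in> {1..q}" using assms(1) by (simp add: inr_def)
  have j': "j' \<in> {1..q}" using assms(2) by (simp add: irr_cons inr_def)
  have f: "L p q (l, j, Suc a) (L p q (l, j', a) (Poly_Mapping.single u 1)) = linext (M p q (l, j, Suc a)) (M p q (l, j', a) u :: 'k vec)"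
    if "l \<in> {1..p} - {cc a}" for l
    using that j j' by (simp add: L_def linext_single inr_def)
  have "(\<Sum>l\<in>{1..p} - {cc a}. L p q (l, j, Suc a) (L p q (l, j', a) (Poly_Mapping.single u 1)))
      = (\<Sum>l\<in>{1..p} - {cc a}. linext (M p q (l, j, Suc a)) (M p q (l, j', a) u :: 'k vec))"
    by (rule sum.cong[OF refl]) (rule f)
  then show ?thesis unfolding L_single[OF assms(1)] M_lead2_L[OF assms(2)] by (simp only:)
qed

lemma cc_Suc: "cc (Suc a) \<noteq> cc a"
  by (simp add: cc_def)

lemma long_level: "long_ok g u d \<Longrightarrow> snd (snd d) = snd (snd g)"
  by (auto simp: long_ok_def)

lemma vec_ext:
  fixes F G :: "'k::field vec \<Rightarrow> 'k vec"
  assumes "lin F" "lin G" "\<And>v. v \<in> Poly_Mapping.keys Y \<Longrightarrow> F (Poly_Mapping.single v 1) = G (Poly_Mapping.single v 1)"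
  shows "F Y = G Y"
proof -
  have "F Y = linext (\<lambda>w. F (Poly_Mapping.single w 1)) Y" by (rule lin_eq_linext[OF assms(1)])
  also have "\<dots> = linext (\<lambda>w. G (Poly_Mapping.single w 1)) Y" by (rule linext_cong[OF refl assms(3)])
  also have "\<dots> = G Y" by (rule lin_eq_linext[OF assms(2), symmetric])
  finally show ?thesis .
qed

lemma lin_R1: "lin (\<lambda>Y. \<Sum>l\<in>S. L p q (i, l, a) (L p q (i', l, Suc a) Y) :: 'k::field vec)"
  by (simp add: lin_def lin_add[OF lin_L] lin_sc[OF lin_L] sum.distrib sc_sum)

lemma lin_delta: "lin (\<lambda>Y. if c then Y else (0 :: 'k::field vec))"
  by (simp add: lin_def)

lemma R1_case1:
  assumes "2 \<le> q" "i \<in> {1..p}" "i' \<in> {1..p}" "irr p q w"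
    "w = [] \<or> \<not> lead1 (i', cc a, Suc a) (hd w) \<and> \<not> lead2 (i', cc a, Suc a) (hd w)"
  shows "(\<Sum>l\<in>{1..q}. L p q (i, l, a) (L p q (i', l, Suc a) (Poly_Mapping.single w 1)))
     = (if i = i' then Poly_Mapping.single w 1 else (0 :: 'k::field vec))"
proof -
  let ?f = "\<lambda>l. L p q (i, l, a) (L p q (i', l, Suc a) (Poly_Mapping.single w 1)) :: 'k vec"
  have cc: "cc a \<in> {1..q}" using cc_range[OF assms(1)] .
  have inr1: "inr p q (i', cc a, Suc a)" using assms(3) cc by (simp add: inr_def)
  have inr2: "inr p q (i, cc a, a)" using assms(2) cc by (simp add: inr_def)
  have push: "L p q (i', cc a, Suc a) (Poly_Mapping.single w 1) = Poly_Mapping.single ((i', cc a, Suc a) # w) (1::'k)"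
    by (rule L_push[OF inr1 assms(4) assms(5)])
  have irrc: "irr p q ((i', cc a, Suc a) # w)" using inr1 assms(4,5) by (auto simp: irr_cons)
  have "(\<Sum>l\<in>{1..q}. ?f l) = ?f (cc a) + (\<Sum>l\<in>{1..q} - {cc a}. ?f l)"
    using cc by (simp add: sum.remove)
  also have "?f (cc a) = (if i = i' then Poly_Mapping.single w 1 else 0) - (\<Sum>l\<in>{1..q} - {cc a}. ?f l)"
    unfolding push by (rule L_lead1[OF inr2 irrc])
  finally show ?thesis by simp
qed

lemma R1:
  assumes "2 \<le> p" "2 \<le> q" "i \<in> {1..p}" "i' \<in> {1..p}" "irr p q w"
  shows "(\<Sum>l\<in>{1..q}. L p q (i, l, a) (L p q (i', l, Suc a) (Poly_Mapping.single w 1)))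
     = (if i = i' then Poly_Mapping.single w 1 else (0 :: 'k::field vec))"
  using assms(3-5)
proof (induction w arbitrary: i i' rule: length_induct)
  case (1 w)
  have ih: "\<And>ys i1 i2. length ys < length w \<Longrightarrow> i1 \<in> {1..p} \<Longrightarrow> i2 \<in> {1..p} \<Longrightarrow> irr p q ys \<Longrightarrow>
     (\<Sum>l\<in>{1..q}. L p q (i1, l, a) (L p q (i2, l, Suc a) (Poly_Mapping.single ys 1)))
       = (if i1 = i2 then Poly_Mapping.single ys 1 else (0 :: 'k vec))"
    using "1.IH" by blast
  show ?case
  proof (cases "w = [] \<or> \<not> lead1 (i', cc a, Suc a) (hd w) \<and> \<not> lead2 (i', cc a, Suc a) (hd w)")
    case True then show ?thesis by (rule R1_case1[OF assms(2) "1.prems"(1,2,3)])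
  next
    case False
    then obtain d u where w: "w = d # u" and ld: "lead1 (i', cc a, Suc a) d \<or> lead2 (i', cc a, Suc a) d"
      by (cases w) auto
    obtain x y b where d: "d = (x, y, b)" by (cases d) auto
    have "\<not> lead1 (i', cc a, Suc a) d" using cc_Suc[of a] by (auto simp: lead1_def d)
    then have l2: "lead2 (i', cc a, Suc a) d" using ld by simp
    then have e: "b = a" "i' = cc a" "x = cc a" by (auto simp: lead2_def d)
    have irrw: "irr p q ((cc a, y, a) # u)" using "1.prems"(3) by (simp add: w d e)
    have y: "y \<in> {1..q}" using irrw by (simp add: irr_cons inr_def)
    have ccp: "cc a \<in> {1..p}" using cc_range[OF assms(1)] .
    define Y where "Y p' = (L p q (p', y, a) (Poly_Mapping.single u 1) :: 'k vec)" for p'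
    have step: "L p q (cc a, l, Suc a) (Poly_Mapping.single ((cc a, y, a) # u) 1)
        = (if l = y then Poly_Mapping.single u 1 else 0) - (\<Sum>p'\<in>{1..p} - {cc a}. L p q (p', l, Suc a) (Y p'))"
      if "l \<in> {1..q}" for l
      using L_lead2[where a=a and j=l and j'=y and u=u and p=p and q=q, OF _ irrw] that ccp
      by (simp add: inr_def Y_def)
    have inner: "(\<Sum>l\<in>{1..q}. L p q (i, l, a) (L p q (p', l, Suc a) (Y p'))) = (if i = p' then Y p' else 0)"
      if p': "p' \<in> {1..p} - {cc a}" for p'
    proof (rule vec_ext[OF lin_R1 lin_delta])
      fix v assume v: "v \<in> Poly_Mapping.keys (Y p')"
      have inrY: "inr p q (p', y, a)" using p' y by (simp add: inr_def)
      have vM: "v \<in> Poly_Mapping.keys (M p q (p', y, a) u :: 'k vec)" using v inrY by (simp add: L_single Y_def)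
      have irrv: "irr p q v" using M_irr[OF _ inrY vM] irrw by (simp add: irr_cons)
      show "(\<Sum>l\<in>{1..q}. L p q (i, l, a) (L p q (p', l, Suc a) (Poly_Mapping.single v 1)))
          = (if i = p' then Poly_Mapping.single v 1 else (0 :: 'k vec))"
      proof (cases "length v \<le> length u")
        case True show ?thesis by (rule ih) (use True "1.prems"(1) p' irrv w in auto)
      next
        case False
        then have lk: "v \<noteq> [] \<and> long_ok (p', y, a) u (hd v)" using long_key[OF vM] by blast
        then have lev: "snd (snd (hd v)) = a" using long_level by fastforce
        have "\<not> lead1 (p', cc a, Suc a) (hd v) \<and> \<not> lead2 (p', cc a, Suc a) (hd v)"
          using lev p' by (cases "hd v") (auto simp: lead1_def lead2_def)
        then show ?thesis using R1_case1[OF assms(2) "1.prems"(1) _ irrv, of p' a] p' by simp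
      qed
    qed
    let ?A = "\<lambda>l. (if l = y then Poly_Mapping.single u 1 else (0 :: 'k vec))"
    let ?B = "\<lambda>l. (\<Sum>p'\<in>{1..p} - {cc a}. L p q (p', l, Suc a) (Y p'))"
    have "(\<Sum>l\<in>{1..q}. L p q (i, l, a) (L p q (i', l, Suc a) (Poly_Mapping.single w 1)))
        = (\<Sum>l\<in>{1..q}. L p q (i, l, a) (?A l - ?B l))"
      by (rule sum.cong[OF refl]) (simp add: w d e step)
    also have "\<dots> = (\<Sum>l\<in>{1..q}. L p q (i, l, a) (?A l)) - (\<Sum>l\<in>{1..q}. L p q (i, l, a) (?B l))"
      by (simp add: lin_diff[OF lin_L] sum_subtractf)
    also have "(\<Sum>l\<in>{1..q}. L p q (i, l, a) (?A l)) = Y i"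
      using y by (simp add: L_zero Y_def if_distrib[of "L p q (i, _, a)"] sum.delta cong: if_cong)
    also have "(\<Sum>l\<in>{1..q}. L p q (i, l, a) (?B l))
        = (\<Sum>p'\<in>{1..p} - {cc a}. \<Sum>l\<in>{1..q}. L p q (i, l, a) (L p q (p', l, Suc a) (Y p')))"
      by (simp add: lin_sum[OF lin_L]) (rule sum.swap)
    also have "\<dots> = (\<Sum>p'\<in>{1..p} - {cc a}. if i = p' then Y p' else 0)"
      by (rule sum.cong[OF refl]) (rule inner)
    also have "\<dots> = (if i \<noteq> cc a then Y i else 0)"
      using "1.prems"(1) by (simp add: sum.delta')
    also have "Y i - (if i \<noteq> cc a then Y i else 0) = (if i = cc a then Y (cc a) else 0)"
      by simp
    also have "Y (cc a) = Poly_Mapping.single w 1"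
    proof -
      have "inr p q (cc a, y, a)" using ccp y by (simp add: inr_def)
      moreover have "irr p q u" "u = [] \<or> \<not> lead1 (cc a, y, a) (hd u) \<and> \<not> lead2 (cc a, y, a) (hd u)"
        using irrw by (auto simp: irr_cons)
      ultimately show ?thesis unfolding Y_def by (simp add: L_push w d e)
    qed
    finally show ?thesis using e by simp
  qed
qed

lemma lin_R2: "lin (\<lambda>Y. \<Sum>l\<in>S. L p q (l, j, Suc a) (L p q (l, j', a) Y) :: 'k::field vec)"
  by (simp add: lin_def lin_add[OF lin_L] lin_sc[OF lin_L] sum.distrib sc_sum)

lemma R2_case1:
  assumes "2 \<le> p" "j \<in> {1..q}" "j' \<in> {1..q}" "irr p q w"
    "w = [] \<or> \<not> lead1 (cc a, j', a) (hd w) \<and> \<not> lead2 (cc a, j', a) (hd w)"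
  shows "(\<Sum>l\<in>{1..p}. L p q (l, j, Suc a) (L p q (l, j', a) (Poly_Mapping.single w 1)))
     = (if j = j' then Poly_Mapping.single w 1 else (0 :: 'k::field vec))"
proof -
  let ?f = "\<lambda>l. L p q (l, j, Suc a) (L p q (l, j', a) (Poly_Mapping.single w 1)) :: 'k vec"
  have cc: "cc a \<in> {1..p}" using cc_range[OF assms(1)] .
  have inr1: "inr p q (cc a, j', a)" using assms(3) cc by (simp add: inr_def)
  have inr2: "inr p q (cc a, j, Suc a)" using assms(2) cc by (simp add: inr_def)
  have push: "L p q (cc a, j', a) (Poly_Mapping.single w 1) = Poly_Mapping.single ((cc a, j', a) # w) (1::'k)"
    by (rule L_push[OF inr1 assms(4) assms(5)])
  have irrc: "irr p q ((cc a, j', a) # w)" using inr1 assms(4,5) by (auto simp: irr_cons)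
  have "(\<Sum>l\<in>{1..p}. ?f l) = ?f (cc a) + (\<Sum>l\<in>{1..p} - {cc a}. ?f l)"
    using cc by (simp add: sum.remove)
  also have "?f (cc a) = (if j = j' then Poly_Mapping.single w 1 else 0) - (\<Sum>l\<in>{1..p} - {cc a}. ?f l)"
    unfolding push by (rule L_lead2[OF inr2 irrc])
  finally show ?thesis by simp
qed

lemma R2:
  assumes "2 \<le> p" "2 \<le> q" "j \<in> {1..q}" "j' \<in> {1..q}" "irr p q w"
  shows "(\<Sum>l\<in>{1..p}. L p q (l, j, Suc a) (L p q (l, j', a) (Poly_Mapping.single w 1)))
     = (if j = j' then Poly_Mapping.single w 1 else (0 :: 'k::field vec))"
  using assms(3-5)
proof (induction w arbitrary: j j' rule: length_induct)
  case (1 w)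
  have ih: "\<And>ys j1 j2. length ys < length w \<Longrightarrow> j1 \<in> {1..q} \<Longrightarrow> j2 \<in> {1..q} \<Longrightarrow> irr p q ys \<Longrightarrow>
     (\<Sum>l\<in>{1..p}. L p q (l, j1, Suc a) (L p q (l, j2, a) (Poly_Mapping.single ys 1)))
       = (if j1 = j2 then Poly_Mapping.single ys 1 else (0 :: 'k vec))"
    using "1.IH" by blast
  show ?case
  proof (cases "w = [] \<or> \<not> lead1 (cc a, j', a) (hd w) \<and> \<not> lead2 (cc a, j', a) (hd w)")
    case True then show ?thesis by (rule R2_case1[OF assms(1) "1.prems"(1,2,3)])
  next
    case False
    then obtain d u where w: "w = d # u" and ld: "lead1 (cc a, j', a) d \<or> lead2 (cc a, j', a) d"
      by (cases w) auto
    obtain x y b where d: "d = (x, y, b)" by (cases d) auto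
    have "\<not> lead2 (cc a, j', a) d" using cc_Suc by (auto simp: lead2_def d)
    then have l1: "lead1 (cc a, j', a) d" using ld by simp
    then have e: "b = Suc a" "j' = cc a" "y = cc a" by (auto simp: lead1_def d)
    have irrw: "irr p q ((x, cc a, Suc a) # u)" using "1.prems"(3) by (simp add: w d e)
    have x: "x \<in> {1..p}" using irrw by (simp add: irr_cons inr_def)
    have ccq: "cc a \<in> {1..q}" using cc_range[OF assms(2)] .
    define Y where "Y q' = (L p q (x, q', Suc a) (Poly_Mapping.single u 1) :: 'k vec)" for q'
    have step: "L p q (l, cc a, a) (Poly_Mapping.single ((x, cc a, Suc a) # u) 1)
        = (if l = x then Poly_Mapping.single u 1 else 0) - (\<Sum>q'\<in>{1..q} - {cc a}. L p q (l, q', a) (Y q'))"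
      if "l \<in> {1..p}" for l
      using L_lead1[where a=a and i=l and i'=x and u=u and p=p and q=q, OF _ irrw] that ccq
      by (simp add: inr_def Y_def)
    have inner: "(\<Sum>l\<in>{1..p}. L p q (l, j, Suc a) (L p q (l, q', a) (Y q'))) = (if j = q' then Y q' else 0)"
      if q': "q' \<in> {1..q} - {cc a}" for q'
    proof (rule vec_ext[OF lin_R2 lin_delta])
      fix v assume v: "v \<in> Poly_Mapping.keys (Y q')"
      have inrY: "inr p q (x, q', Suc a)" using q' x by (simp add: inr_def)
      have vM: "v \<in> Poly_Mapping.keys (M p q (x, q', Suc a) u :: 'k vec)" using v inrY by (simp add: L_single Y_def)
      have irrv: "irr p q v" using M_irr[OF _ inrY vM] irrw by (simp add: irr_cons)
      show "(\<Sum>l\<in>{1..p}. L p q (l, j, Suc a) (L p q (l, q', a) (Poly_Mapping.single v 1)))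
          = (if j = q' then Poly_Mapping.single v 1 else (0 :: 'k vec))"
      proof (cases "length v \<le> length u")
        case True show ?thesis by (rule ih) (use True "1.prems"(1) q' irrv w in auto)
      next
        case False
        then have lk: "v \<noteq> [] \<and> long_ok (x, q', Suc a) u (hd v)" using long_key[OF vM] by blast
        then have lev: "snd (snd (hd v)) = Suc a" using long_level by fastforce
        have "\<not> lead1 (cc a, q', a) (hd v) \<and> \<not> lead2 (cc a, q', a) (hd v)"
          using lev q' by (cases "hd v") (auto simp: lead1_def lead2_def)
        then show ?thesis using R2_case1[OF assms(1) "1.prems"(1) _ irrv, of q' a] q' by simp
      qed
    qed
    let ?A = "\<lambda>l. (if l = x then Poly_Mapping.single u 1 else (0 :: 'k vec))"
    let ?B = "\<lambda>l. (\<Sum>q'\<in>{1..q} - {cc a}. L p q (l, q', a) (Y q'))"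
    have "(\<Sum>l\<in>{1..p}. L p q (l, j, Suc a) (L p q (l, j', a) (Poly_Mapping.single w 1)))
        = (\<Sum>l\<in>{1..p}. L p q (l, j, Suc a) (?A l - ?B l))"
      by (rule sum.cong[OF refl]) (simp add: w d e step)
    also have "\<dots> = (\<Sum>l\<in>{1..p}. L p q (l, j, Suc a) (?A l)) - (\<Sum>l\<in>{1..p}. L p q (l, j, Suc a) (?B l))"
      by (simp add: lin_diff[OF lin_L] sum_subtractf)
    also have "(\<Sum>l\<in>{1..p}. L p q (l, j, Suc a) (?A l)) = Y j"
      using x by (simp add: L_zero Y_def if_distrib[of "L p q (_, j, Suc a)"] sum.delta cong: if_cong)
    also have "(\<Sum>l\<in>{1..p}. L p q (l, j, Suc a) (?B l))
        = (\<Sum>q'\<in>{1..q} - {cc a}. \<Sum>l\<in>{1..p}. L p q (l, j, Suc a) (L p q (l, q', a) (Y q')))"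
      by (simp add: lin_sum[OF lin_L]) (rule sum.swap)
    also have "\<dots> = (\<Sum>q'\<in>{1..q} - {cc a}. if j = q' then Y q' else 0)"
      by (rule sum.cong[OF refl]) (rule inner)
    also have "\<dots> = (if j \<noteq> cc a then Y j else 0)"
      using "1.prems"(1) by (simp add: sum.delta')
    also have "Y j - (if j \<noteq> cc a then Y j else 0) = (if j = cc a then Y (cc a) else 0)"
      by simp
    also have "Y (cc a) = Poly_Mapping.single w 1"
    proof -
      have "inr p q (x, cc a, Suc a)" using ccq x by (simp add: inr_def)
      moreover have "irr p q u" "u = [] \<or> \<not> lead1 (x, cc a, Suc a) (hd u) \<and> \<not> lead2 (x, cc a, Suc a) (hd u)"
        using irrw by (auto simp: irr_cons)
      ultimately show ?thesis unfolding Y_def by (simp add: L_push w d e)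
    qed
    finally show ?thesis using e by simp
  qed
qed



primrec Lw :: "nat \<Rightarrow> nat \<Rightarrow> gen list \<Rightarrow> 'k::field vec \<Rightarrow> 'k vec" where
  "Lw p q [] v = v"
| "Lw p q (x # xs) v = L p q x (Lw p q xs v)"

lemma lin_Lw: "lin (Lw p q xs)"
  by (induction xs) (simp_all add: lin_id(2) lin_comp[OF lin_L])

lemma Lw_append: "Lw p q (xs @ ys) v = Lw p q xs (Lw p q ys v)"
  by (induction xs) simp_all

lemma Lw_irr: "(\<And>w. w \<in> Poly_Mapping.keys v \<Longrightarrow> irr p q w) \<Longrightarrow> u \<in> Poly_Mapping.keys (Lw p q xs v) \<Longrightarrow> irr p q u"
proof (induction xs arbitrary: u)
  case Nil then show ?case by simp
next
  case (Cons x xs) then show ?case by (auto intro: L_irr)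
qed

definition act :: "nat \<Rightarrow> nat \<Rightarrow> (gen word \<Rightarrow>\<^sub>0 'k::field) \<Rightarrow> 'k vec \<Rightarrow> 'k vec" where
  "act p q P v = linext (\<lambda>w. Lw p q (letters w) v) P"

lemma lin_act_P: "lin (\<lambda>P. act p q P v)"
  by (simp add: act_def lin_linext)

lemma lin_act_v: "lin (act p q P)"
proof (rule linI)
  fix v1 v2
  show "act p q P (v1 + v2) = act p q P v1 + act p q P v2"
    by (simp add: act_def linext_def lin_add[OF lin_Lw] sc_add sum.distrib)
next
  fix c v
  show "act p q P (sc c v) = sc c (act p q P v)"
    by (simp add: act_def linext_def lin_sc[OF lin_Lw] sc_sc mult.commute sc_sum)
qed

lemma act_single: "act p q (Poly_Mapping.single w c) v = sc c (Lw p q (letters w) v)"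
  by (simp add: act_def linext_single)

lemma act_mult: "act p q (P * Q) v = act p q P (act p q Q v)"
proof (rule lin_eq[where f="\<lambda>P. act p q (P * Q) v" and h="\<lambda>P. act p q P (act p q Q v)"])
  show "lin (\<lambda>P. act p q (P * Q) v)" by (rule lin_comp[OF lin_act_P lin_mult_left])
  show "lin (\<lambda>P. act p q P (act p q Q v))" by (rule lin_act_P)
  fix u
  show "act p q (Poly_Mapping.single u 1 * Q) v = act p q (Poly_Mapping.single u 1) (act p q Q v)"
  proof (rule lin_eq[where f="\<lambda>Q. act p q (Poly_Mapping.single u 1 * Q) v" and h="\<lambda>Q. act p q (Poly_Mapping.single u 1) (act p q Q v)"])
    show "lin (\<lambda>Q. act p q (Poly_Mapping.single u 1 * Q) v)" by (rule lin_comp[OF lin_act_P lin_mult_right])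
    show "lin (\<lambda>Q. act p q (Poly_Mapping.single u 1) (act p q Q v))" by (rule lin_comp[OF lin_act_v lin_act_P])
    fix w
    show "act p q (Poly_Mapping.single u 1 * Poly_Mapping.single w 1) v
        = act p q (Poly_Mapping.single u 1) (act p q (Poly_Mapping.single w 1) v)"
      by (simp add: mult_single act_single Lw_append)
  qed
qed

lemma act_one: "act p q 1 v = v"
  by (simp add: act_single flip: single_one)

lemma act_X: "act p q (X i j a) v = L p q (i, j, a) v"
  by (simp add: X_def act_single)

lemma act_irr: "(\<And>w. w \<in> Poly_Mapping.keys v \<Longrightarrow> irr p q w) \<Longrightarrow> u \<in> Poly_Mapping.keys (act p q P v) \<Longrightarrow> irr p q u"
  unfolding act_def by (auto dest!: keys_linext_elem intro: Lw_irr)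

lemma act_if01: "act p q (if c then 1 else 0) v = (if c then v else 0)"
  by (simp add: act_one lin_zero[OF lin_act_P])

lemma R1_vec:
  assumes "2 \<le> p" "2 \<le> q" "i \<in> {1..p}" "i' \<in> {1..p}" "\<And>w. w \<in> Poly_Mapping.keys v \<Longrightarrow> irr p q w"
  shows "(\<Sum>l\<in>{1..q}. L p q (i, l, a) (L p q (i', l, Suc a) v)) = (if i = i' then v else (0 :: 'k::field vec))"
  by (rule vec_ext[OF lin_R1 lin_delta]) (rule R1[OF assms(1-4) assms(5)])

lemma R2_vec:
  assumes "2 \<le> p" "2 \<le> q" "j \<in> {1..q}" "j' \<in> {1..q}" "\<And>w. w \<in> Poly_Mapping.keys v \<Longrightarrow> irr p q w"
  shows "(\<Sum>l\<in>{1..p}. L p q (l, j, Suc a) (L p q (l, j', a) v)) = (if j = j' then v else (0 :: 'k::field vec))"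
  by (rule vec_ext[OF lin_R2 lin_delta]) (rule R2[OF assms(1-4) assms(5)])

lemma act_rel:
  assumes "2 \<le> p" "2 \<le> q" "r \<in> hrels p q" "\<And>w. w \<in> Poly_Mapping.keys v \<Longrightarrow> irr p q w"
  shows "act p q r v = (0 :: 'k::field vec)"
proof -
  from assms(3) consider (out) i j a where "r = X i j a" "\<not> (i \<in> {1..p} \<and> j \<in> {1..q})"
    | (r1) i i' a where "r = (\<Sum>l\<in>{1..q}. X i l a * X i' l (Suc a)) - (if i = i' then 1 else 0)" "i \<in> {1..p}" "i' \<in> {1..p}"
    | (r2) j j' a where "r = (\<Sum>l\<in>{1..p}. X l j (Suc a) * X l j' a) - (if j = j' then 1 else 0)" "j \<in> {1..q}" "j' \<in> {1..q}"
    unfolding hrels_def by blast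
  then show ?thesis
  proof cases
    case out then show ?thesis by (simp add: act_X L_out inr_def)
  next
    case r1
    have e: "act p q r v = (\<Sum>l\<in>{1..q}. L p q (i, l, a) (L p q (i', l, Suc a) v)) - (if i = i' then v else 0)"
      unfolding r1(1) by (simp add: lin_diff[OF lin_act_P] lin_sum[OF lin_act_P] act_mult act_X act_if01)
    have s: "(\<Sum>l\<in>{1..q}. L p q (i, l, a) (L p q (i', l, Suc a) v)) = (if i = i' then v else 0)"
      by (rule R1_vec[OF assms(1,2) r1(2,3)], rule assms(4))
    show ?thesis unfolding e s by simp
  next
    case r2
    have e: "act p q r v = (\<Sum>l\<in>{1..p}. L p q (l, j, Suc a) (L p q (l, j', a) v)) - (if j = j' then v else 0)"
      unfolding r2(1) by (simp add: lin_diff[OF lin_act_P] lin_sum[OF lin_act_P] act_mult act_X act_if01)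
    have s: "(\<Sum>l\<in>{1..p}. L p q (l, j, Suc a) (L p q (l, j', a) v)) = (if j = j' then v else 0)"
      by (rule R2_vec[OF assms(1,2) r2(2,3)], rule assms(4))
    show ?thesis unfolding e s by simp
  qed
qed

lemma act_ideal:
  assumes "2 \<le> p" "2 \<le> q" "x \<in> ideal_of (hrels p q)"
  shows "\<And>v. (\<And>w. w \<in> Poly_Mapping.keys v \<Longrightarrow> irr p q w) \<Longrightarrow> act p q x v = (0 :: 'k::field vec)"
  using assms(3)
proof (induction x rule: ideal_of.induct)
  case zero then show ?case by (simp add: act_def)
next
  case (gen r a b)
  have "act p q r (act p q b v) = 0"
    by (rule act_rel[OF assms(1,2) gen(1)]) (use act_irr gen(2) in blast)
  then show ?case by (simp add: act_mult lin_zero[OF lin_act_v])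
next
  case (add x y) then show ?case by (simp add: lin_add[OF lin_act_P])
qed

lemma nonzero_hrels:
  assumes "2 \<le> p" "2 \<le> q"
  shows "nonzero_alg (hrels p q :: (gen word \<Rightarrow>\<^sub>0 'k::field) set)"
  unfolding nonzero_alg_def
proof
  assume "(1 :: gen word \<Rightarrow>\<^sub>0 'k) \<in> ideal_of (hrels p q)"
  then have "act p q (1 :: gen word \<Rightarrow>\<^sub>0 'k) (Poly_Mapping.single [] 1) = 0"
    by (rule act_ideal[OF assms]) simp
  then have "Poly_Mapping.single ([] :: gen list) (1::'k) = 0" by (simp add: act_one)
  then have "Poly_Mapping.lookup (Poly_Mapping.single ([] :: gen list) (1::'k)) [] = Poly_Mapping.lookup (0 :: gen list \<Rightarrow>\<^sub>0 'k) []" by (simp only:)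
  then show False by simp
qed



lemma bialg_H: "bialgebra (hrels K K :: (gen word \<Rightarrow>\<^sub>0 'k::field) set) (ext (gcop K)) (heps K)"
  unfolding bialgebra_def
  by (simp add: alg_map_D char_map_heps coassoc lcounit_D rcounit_D)

theorem proposition5p2:
  fixes m n :: nat
  assumes "m \<ge> 2" and "n \<ge> 2"
  shows "hopf_galois_system
           (hrels m m :: (gen word \<Rightarrow>\<^sub>0 'k::field) set) (hrels n n) (hrels m n) (hrels n m)
           (ext (gcop m)) (heps m) (ext (gcop n)) (heps n)
           (ext (gcop m)) (ext (gcop n)) (ext (gcop n)) (ext (gcop m))"
  unfolding hopf_galois_system_def
  using assms
  by (simp add: nonzero_hrels bialg_H alg_map_D coassoc lcounit_D rcounit_D
        lin_map_Santi hg4a hg4b exI[where x=Santi])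

end
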